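(* Let $R$ be a commutative ring and $\mathcal{G}$ a Gabriel filter of finite type, and let $\sigma_\mathcal{G}$ and $T_\mathcal{G}=\operatorname{Coker}\sigma_\mathcal{G}$ be as constructed below. Then $T_\mathcal{G}$ is a silting module with respect to $\sigma_\mathcal{G}$, and $\operatorname{Gen}T_\mathcal{G}=\operatorname{Div}\mathcal{G}$.
   Context: A Gabriel filter is a filter $\mathcal{G}$ of ideals such that (i) $I\in\mathcal{G}$, $x\in R$ imply $(I:x)=\{r\mid xr\in I\}\in\mathcal{G}$, and (ii) if $J$ is an ideal and there is $I\in\mathcal{G}$ with $(J:x)\in\mathcal{G}$ for all $x\in I$, then $J\in\mathcal{G}$; it is of finite type if it has a filter basis of finitely generated ideals. $\operatorname{Div}\mathcal{G}=\{M\mid MI=M\ \forall I\in\mathcal{G}\}$. $\operatorname{Gen}T$: epimorphic images of direct sums of copies of $T$. For $\alpha:A\to B$, $\mathcal{D}_\alpha=\{X\mid\operatorname{Hom}_R(\alpha,X)\text{ surjective}\}$; $T$ is silting with respect to $\sigma:P_{-1}\to P_0$ ($P_i$ projective) if $T=\operatorname{Coker}\sigma$ and $\operatorname{Gen}T=\mathcal{D}_\sigma$. Construction: let $\mathcal{I}$ be the set of finitely generated ideals in $\mathcal{G}$, and for each $I\in\mathcal{I}$ fix generators $x^I_0,\dots,x^I_{n_I-1}$. Let $\Lambda$ be the set of all finite sequences of pairs $(I,k)$ with $I\in\mathcal{I}$, $0\le k<n_I$, including the empty sequence $w$; $\sqcup$ denotes concatenation. Let $F$ be free on basis $\Lambda$,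 $F'$ free on basis $\Lambda\setminus\{w\}$, $K$ free on basis $\Lambda\times\mathcal{I}$. Define $\varphi_\mathcal{G}:K\to F$ by $\varphi_\mathcal{G}((\lambda,I))=\lambda-\sum_{k<n_I}x^I_k(\lambda\sqcup(I,k))$, and $\varphi'_\mathcal{G}=p\circ\varphi_\mathcal{G}:K\to F'$ where $p:F\to F'$ is the projection killing the coordinate $w$. Let $\sigma_\mathcal{G}=\varphi_\mathcal{G}\oplus\varphi'_\mathcal{G}:K\oplus K\to F\oplus F'$ and $T_\mathcal{G}=\operatorname{Coker}\sigma_\mathcal{G}=\operatorname{Coker}\varphi_\mathcal{G}\oplus\operatorname{Coker}\varphi'_\mathcal{G}$. *)

theory Defs
  imports "HOL-Algebra.Module" "HOL-Algebra.Ideal"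
begin

definition colon_ideal :: "('a,'c) ring_scheme \<Rightarrow> 'a set \<Rightarrow> 'a \<Rightarrow> 'a set" where
  "colon_ideal R J x = {r \<in> carrier R. x \<otimes>\<^bsub>R\<^esub> r \<in> J}"

definition ideal_filter :: "('a,'c) ring_scheme \<Rightarrow> 'a set set \<Rightarrow> bool" where
  "ideal_filter R G \<longleftrightarrow> G \<noteq> {} \<and> (\<forall>I\<in>G. ideal I R)
     \<and> (\<forall>I\<in>G. \<forall>J. ideal J R \<and> I \<subseteq> J \<longrightarrow> J \<in> G)
     \<and> (\<forall>I\<in>G. \<forall>J\<in>G. I \<inter> J \<in> G)"

definition gabriel_filter :: "('a,'c) ring_scheme \<Rightarrow> 'a set set \<Rightarrow> bool" where
  "gabriel_filter R G \<longleftrightarrow> ideal_filter R G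
     \<and> (\<forall>I\<in>G. \<forall>x\<in>carrier R. colon_ideal R I x \<in> G)
     \<and> (\<forall>J I. ideal J R \<and> I \<in> G \<and> (\<forall>x\<in>I. colon_ideal R J x \<in> G) \<longrightarrow> J \<in> G)"

definition fin_gen_ideal :: "('a,'c) ring_scheme \<Rightarrow> 'a set \<Rightarrow> bool" where
  "fin_gen_ideal R I \<longleftrightarrow> (\<exists>S. finite S \<and> S \<subseteq> carrier R \<and> I = Idl\<^bsub>R\<^esub> S)"

definition finite_type :: "('a,'c) ring_scheme \<Rightarrow> 'a set set \<Rightarrow> bool" where
  "finite_type R G \<longleftrightarrow> (\<forall>J\<in>G. \<exists>I\<in>G. I \<subseteq> J \<and> fin_gen_ideal R I)"

definition mod_hom :: "('a,'c) ring_scheme \<Rightarrow> ('a,'m) module \<Rightarrow> ('a,'n) module \<Rightarrow> ('m \<Rightarrow> 'n) set" where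
  "mod_hom R M N = {f. (\<forall>x\<in>carrier M. f x \<in> carrier N)
     \<and> (\<forall>x\<in>carrier M. \<forall>y\<in>carrier M. f (x \<oplus>\<^bsub>M\<^esub> y) = f x \<oplus>\<^bsub>N\<^esub> f y)
     \<and> (\<forall>a\<in>carrier R. \<forall>x\<in>carrier M. f (a \<odot>\<^bsub>M\<^esub> x) = a \<odot>\<^bsub>N\<^esub> f x)}"

definition free_module :: "('a,'c) ring_scheme \<Rightarrow> 'b set \<Rightarrow> ('a, 'b \<Rightarrow> 'a) module" where
  "free_module R B = \<lparr>carrier = {f. (\<forall>b. f b \<in> carrier R) \<and> (\<forall>b. b \<notin> B \<longrightarrow> f b = \<zero>\<^bsub>R\<^esub>)
                                   \<and> finite {b. f b \<noteq> \<zero>\<^bsub>R\<^esub>}},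
                      mult = (\<lambda>f g. undefined), one = undefined,
                      zero = (\<lambda>b. \<zero>\<^bsub>R\<^esub>),
                      add = (\<lambda>f g b. f b \<oplus>\<^bsub>R\<^esub> g b),
                      smult = (\<lambda>a f b. a \<otimes>\<^bsub>R\<^esub> f b)\<rparr>"

definition fbasis :: "('a,'c) ring_scheme \<Rightarrow> 'b \<Rightarrow> ('b \<Rightarrow> 'a)" where
  "fbasis R b = (\<lambda>c. if c = b then \<one>\<^bsub>R\<^esub> else \<zero>\<^bsub>R\<^esub>)"

definition lin_ext :: "('a,'c) ring_scheme \<Rightarrow> ('a,'m) module \<Rightarrow> ('b \<Rightarrow> 'm) \<Rightarrow> ('b \<Rightarrow> 'a) \<Rightarrow> 'm" where
  "lin_ext R M v c = finsum M (\<lambda>b. c b \<odot>\<^bsub>M\<^esub> v b) {b. c b \<noteq> \<zero>\<^bsub>R\<^esub>}"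

definition dsum :: "('a,'m) module \<Rightarrow> ('a,'n) module \<Rightarrow> ('a, 'm \<times> 'n) module" where
  "dsum M N = \<lparr>carrier = carrier M \<times> carrier N,
               mult = (\<lambda>x y. undefined), one = undefined,
               zero = (\<zero>\<^bsub>M\<^esub>, \<zero>\<^bsub>N\<^esub>),
               add = (\<lambda>x y. (fst x \<oplus>\<^bsub>M\<^esub> fst y, snd x \<oplus>\<^bsub>N\<^esub> snd y)),
               smult = (\<lambda>a x. (a \<odot>\<^bsub>M\<^esub> fst x, a \<odot>\<^bsub>N\<^esub> snd x))\<rparr>"

definition copies :: "('a,'t) module \<Rightarrow> 'i set \<Rightarrow> ('a, 'i \<Rightarrow> 't) module" where
  "copies T I = \<lparr>carrier = {f. (\<forall>i. f i \<in> carrier T) \<and> (\<forall>i. i \<notin> I \<longrightarrow> f i = \<zero>\<^bsub>T\<^esub>)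
                                 \<and> finite {i. f i \<noteq> \<zero>\<^bsub>T\<^esub>}},
                 mult = (\<lambda>f g. undefined), one = undefined,
                 zero = (\<lambda>i. \<zero>\<^bsub>T\<^esub>),
                 add = (\<lambda>f g i. f i \<oplus>\<^bsub>T\<^esub> g i),
                 smult = (\<lambda>a f i. a \<odot>\<^bsub>T\<^esub> f i)\<rparr>"

text \<open>X is in Gen T: an epimorphic image of a direct sum of copies of T.  The index set is taken in
  the type of functions T \<Rightarrow> X, which is large enough (T^(Hom(T,X)) \<rightarrow> X).\<close>
definition Gen :: "('a,'c) ring_scheme \<Rightarrow> ('a,'t) module \<Rightarrow> ('a,'x) module \<Rightarrow> bool" where
  "Gen R T X \<longleftrightarrow> (\<exists>(I::('t \<Rightarrow> 'x) set) p. p \<in> mod_hom R (copies T I) X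
                     \<and> p ` carrier (copies T I) = carrier X)"

definition D_class :: "('a,'c) ring_scheme \<Rightarrow> ('a,'m) module \<Rightarrow> ('a,'n) module \<Rightarrow> ('m \<Rightarrow> 'n)
                        \<Rightarrow> ('a,'x) module \<Rightarrow> bool" where
  "D_class R A B \<alpha> X \<longleftrightarrow> (\<forall>g\<in>mod_hom R A X. \<exists>h\<in>mod_hom R B X. \<forall>a\<in>carrier A. h (\<alpha> a) = g a)"

definition mod_ideal_prod :: "('a,'c) ring_scheme \<Rightarrow> ('a,'x) module \<Rightarrow> 'a set \<Rightarrow> 'x set" where
  "mod_ideal_prod R X I = {y. \<exists>n is xs. (\<forall>j<n. is j \<in> I \<and> xs j \<in> carrier X)
                             \<and> y = finsum X (\<lambda>j. is j \<odot>\<^bsub>X\<^esub> xs j) {..<(n::nat)}}"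

definition Div :: "('a,'c) ring_scheme \<Rightarrow> 'a set set \<Rightarrow> ('a,'x) module \<Rightarrow> bool" where
  "Div R G X \<longleftrightarrow> (\<forall>I\<in>G. mod_ideal_prod R X I = carrier X)"

definition is_cokernel :: "('a,'c) ring_scheme \<Rightarrow> ('a,'m) module \<Rightarrow> ('a,'n) module \<Rightarrow> ('m \<Rightarrow> 'n)
                          \<Rightarrow> ('a,'t) module \<Rightarrow> ('n \<Rightarrow> 't) \<Rightarrow> bool" where
  "is_cokernel R A B \<alpha> T \<pi> \<longleftrightarrow> \<pi> \<in> mod_hom R B T \<and> \<pi> ` carrier B = carrier T
       \<and> {y \<in> carrier B. \<pi> y = \<zero>\<^bsub>T\<^esub>} = \<alpha> ` carrier A"

definition fgI :: "('a,'c) ring_scheme \<Rightarrow> 'a set set \<Rightarrow> 'a set set" where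
  "fgI R G = {I \<in> G. fin_gen_ideal R I}"

definition Lam :: "('a,'c) ring_scheme \<Rightarrow> 'a set set \<Rightarrow> ('a set \<Rightarrow> 'a list) \<Rightarrow> ('a set \<times> nat) list set" where
  "Lam R G gens = {l. \<forall>(I,k)\<in>set l. I \<in> fgI R G \<and> k < length (gens I)}"

definition FG where "FG R G gens = free_module R (Lam R G gens)"
definition FG' where "FG' R G gens = free_module R (Lam R G gens - {[]})"
definition KG where "KG R G gens = free_module R (Lam R G gens \<times> fgI R G)"

definition phi_basis where
  "phi_basis R G gens = (\<lambda>(l, I). fbasis R l \<ominus>\<^bsub>FG R G gens\<^esub>
      finsum (FG R G gens) (\<lambda>k. (gens I ! k) \<odot>\<^bsub>FG R G gens\<^esub> fbasis R (l @ [(I,k)])) {..<length (gens I)})"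

definition phiG where "phiG R G gens = lin_ext R (FG R G gens) (phi_basis R G gens)"

definition projw :: "('a,'c) ring_scheme \<Rightarrow> ('b list \<Rightarrow> 'a) \<Rightarrow> ('b list \<Rightarrow> 'a)" where
  "projw R f = f([] := \<zero>\<^bsub>R\<^esub>)"

definition phiG' where "phiG' R G gens = projw R \<circ> phiG R G gens"

definition sigmaG where
  "sigmaG R G gens = (\<lambda>(x, y). (phiG R G gens x, phiG' R G gens y))"

definition sigma_src where "sigma_src R G gens = dsum (KG R G gens) (KG R G gens)"
definition sigma_tgt where "sigma_tgt R G gens = dsum (FG R G gens) (FG' R G gens)"

end

theory Submission
  imports Defs
begin


lemma free_module_carrier:
  "f \<in> carrier (free_module R B) \<longleftrightarrow> (\<forall>b. f b \<in> carrier R) \<and> (\<forall>b. b \<notin> B \<longrightarrow> f b = \<zero>\<^bsub>R\<^esub>)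
                                   \<and> finite {b. f b \<noteq> \<zero>\<^bsub>R\<^esub>}"
  by (simp add: free_module_def)

lemma free_module_ops [simp]:
  "\<zero>\<^bsub>free_module R B\<^esub> = (\<lambda>b. \<zero>\<^bsub>R\<^esub>)"
  "f \<oplus>\<^bsub>free_module R B\<^esub> g = (\<lambda>b. f b \<oplus>\<^bsub>R\<^esub> g b)"
  "a \<odot>\<^bsub>free_module R B\<^esub> f = (\<lambda>b. a \<otimes>\<^bsub>R\<^esub> f b)"
  by (simp_all add: free_module_def)

lemma free_module_module:
  fixes R (structure)
  assumes "cring R" shows "module R (free_module R B)"
proof -
  interpret cring R by fact
  have fin_sub: "finite {b. f b \<oplus> g b \<noteq> \<zero>}" if "finite {b. f b \<noteq> \<zero>}" "finite {b. g b \<noteq> \<zero>}"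
     for f g
    by (rule finite_subset[of _ "{b. f b \<noteq> \<zero>} \<union> {b. g b \<noteq> \<zero>}"]) (use that in auto)
  have fin_sm: "finite {b. a \<otimes> f b \<noteq> \<zero>}" if "finite {b. f b \<noteq> \<zero>}" "a \<in> carrier R" "\<forall>b. f b \<in> carrier R"
     for f a
    by (rule finite_subset[of _ "{b. f b \<noteq> \<zero>}"]) (use that in auto)
  show ?thesis
  proof (rule moduleI[OF assms], rule abelian_groupI)
    fix x assume x: "x \<in> carrier (free_module R B)"
    show "\<exists>y\<in>carrier (free_module R B). y \<oplus>\<^bsub>free_module R B\<^esub> x = \<zero>\<^bsub>free_module R B\<^esub>"
    proof (intro bexI[of _ "\<lambda>b. \<ominus> x b"])
      have "{b. \<ominus> x b \<noteq> \<zero>} = {b. x b \<noteq> \<zero>}" using x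
        by (auto simp: free_module_carrier)
      then show "(\<lambda>b. \<ominus> x b) \<in> carrier (free_module R B)" using x
        by (auto simp: free_module_carrier)
    qed (use x in \<open>auto simp: free_module_carrier l_neg\<close>)
  qed (auto simp: free_module_carrier fin_sub fin_sm a_ac l_distr r_distr m_assoc)
qed


lemma copies_carrier:
  "f \<in> carrier (copies T I) \<longleftrightarrow> (\<forall>i. f i \<in> carrier T) \<and> (\<forall>i. i \<notin> I \<longrightarrow> f i = \<zero>\<^bsub>T\<^esub>)
                                 \<and> finite {i. f i \<noteq> \<zero>\<^bsub>T\<^esub>}"
  by (simp add: copies_def)

lemma copies_ops [simp]:
  "\<zero>\<^bsub>copies T I\<^esub> = (\<lambda>i. \<zero>\<^bsub>T\<^esub>)"
  "f \<oplus>\<^bsub>copies T I\<^esub> g = (\<lambda>i. f i \<oplus>\<^bsub>T\<^esub> g i)"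
  "a \<odot>\<^bsub>copies T I\<^esub> f = (\<lambda>i. a \<odot>\<^bsub>T\<^esub> f i)"
  by (simp_all add: copies_def)

lemma copies_module:
  fixes R (structure)
  assumes "module R T" shows "module R (copies T I)"
proof -
  interpret module R T by fact
  have fin_sub: "finite {b. f b \<oplus>\<^bsub>T\<^esub> g b \<noteq> \<zero>\<^bsub>T\<^esub>}" if "finite {b. f b \<noteq> \<zero>\<^bsub>T\<^esub>}" "finite {b. g b \<noteq> \<zero>\<^bsub>T\<^esub>}"
     for f g
    by (rule finite_subset[of _ "{b. f b \<noteq> \<zero>\<^bsub>T\<^esub>} \<union> {b. g b \<noteq> \<zero>\<^bsub>T\<^esub>}"]) (use that in auto)
  have fin_sm: "finite {b. a \<odot>\<^bsub>T\<^esub> f b \<noteq> \<zero>\<^bsub>T\<^esub>}" if "finite {b. f b \<noteq> \<zero>\<^bsub>T\<^esub>}" "a \<in> carrier R" "\<forall>b. f b \<in> carrier T"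
     for f a
    by (rule finite_subset[of _ "{b. f b \<noteq> \<zero>\<^bsub>T\<^esub>}"]) (use that in auto)
  show ?thesis
  proof (rule moduleI[OF is_cring], rule abelian_groupI)
    fix x assume x: "x \<in> carrier (copies T I)"
    show "\<exists>y\<in>carrier (copies T I). y \<oplus>\<^bsub>copies T I\<^esub> x = \<zero>\<^bsub>copies T I\<^esub>"
    proof (intro bexI[of _ "\<lambda>b. \<ominus>\<^bsub>T\<^esub> x b"])
      have "{b. \<ominus>\<^bsub>T\<^esub> x b \<noteq> \<zero>\<^bsub>T\<^esub>} = {b. x b \<noteq> \<zero>\<^bsub>T\<^esub>}" using x
        by (auto simp: copies_carrier)
      then show "(\<lambda>b. \<ominus>\<^bsub>T\<^esub> x b) \<in> carrier (copies T I)" using x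
        by (auto simp: copies_carrier)
    qed (use x in \<open>auto simp: copies_carrier M.l_neg\<close>)
  qed (auto simp: copies_carrier fin_sub fin_sm M.a_ac smult_l_distr smult_r_distr smult_assoc1)
qed

lemma dsum_carrier [simp]: "carrier (dsum M N) = carrier M \<times> carrier N"
  by (simp add: dsum_def)

lemma dsum_ops [simp]:
  "\<zero>\<^bsub>dsum M N\<^esub> = (\<zero>\<^bsub>M\<^esub>, \<zero>\<^bsub>N\<^esub>)"
  "x \<oplus>\<^bsub>dsum M N\<^esub> y = (fst x \<oplus>\<^bsub>M\<^esub> fst y, snd x \<oplus>\<^bsub>N\<^esub> snd y)"
  "a \<odot>\<^bsub>dsum M N\<^esub> x = (a \<odot>\<^bsub>M\<^esub> fst x, a \<odot>\<^bsub>N\<^esub> snd x)"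
  by (simp_all add: dsum_def)

lemma dsum_module:
  fixes R (structure)
  assumes M: "module R M" and N: "module R N" shows "module R (dsum M N)"
proof -
  interpret M: module R M by fact
  interpret N: module R N by fact
  show ?thesis
  proof (rule moduleI[OF M.is_cring], rule abelian_groupI)
    fix x assume x: "x \<in> carrier (dsum M N)"
    show "\<exists>y\<in>carrier (dsum M N). y \<oplus>\<^bsub>dsum M N\<^esub> x = \<zero>\<^bsub>dsum M N\<^esub>"
      by (intro bexI[of _ "(\<ominus>\<^bsub>M\<^esub> fst x, \<ominus>\<^bsub>N\<^esub> snd x)"]) (use x in \<open>auto simp: M.l_neg N.l_neg\<close>)
  qed (auto simp: M.a_ac N.a_ac M.smult_l_distr M.smult_r_distr M.smult_assoc1
        N.smult_l_distr N.smult_r_distr N.smult_assoc1)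
qed


section \<open>Homomorphisms\<close>

lemma mod_homD:
  assumes "f \<in> mod_hom R M N"
  shows "x \<in> carrier M \<Longrightarrow> f x \<in> carrier N"
    and "x \<in> carrier M \<Longrightarrow> y \<in> carrier M \<Longrightarrow> f (x \<oplus>\<^bsub>M\<^esub> y) = f x \<oplus>\<^bsub>N\<^esub> f y"
    and "a \<in> carrier R \<Longrightarrow> x \<in> carrier M \<Longrightarrow> f (a \<odot>\<^bsub>M\<^esub> x) = a \<odot>\<^bsub>N\<^esub> f x"
  using assms by (auto simp: mod_hom_def)

lemma mod_homI:
  assumes "\<And>x. x \<in> carrier M \<Longrightarrow> f x \<in> carrier N"
    and "\<And>x y. x \<in> carrier M \<Longrightarrow> y \<in> carrier M \<Longrightarrow> f (x \<oplus>\<^bsub>M\<^esub> y) = f x \<oplus>\<^bsub>N\<^esub> f y"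
    and "\<And>a x. a \<in> carrier R \<Longrightarrow> x \<in> carrier M \<Longrightarrow> f (a \<odot>\<^bsub>M\<^esub> x) = a \<odot>\<^bsub>N\<^esub> f x"
  shows "f \<in> mod_hom R M N"
  using assms by (auto simp: mod_hom_def)

lemma mod_hom_comp:
  "f \<in> mod_hom R M N \<Longrightarrow> g \<in> mod_hom R N P \<Longrightarrow> g \<circ> f \<in> mod_hom R M P"
  by (auto simp: mod_hom_def)

lemma mod_hom_zero:
  fixes R (structure)
  assumes "module R M" "module R N" "f \<in> mod_hom R M N"
  shows "f \<zero>\<^bsub>M\<^esub> = \<zero>\<^bsub>N\<^esub>"
proof -
  interpret M: module R M by fact
  interpret N: module R N by fact
  have "f \<zero>\<^bsub>M\<^esub> = f (\<zero> \<odot>\<^bsub>M\<^esub> \<zero>\<^bsub>M\<^esub>)" by simp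
  also have "\<dots> = \<zero> \<odot>\<^bsub>N\<^esub> f \<zero>\<^bsub>M\<^esub>" using mod_homD(3)[OF assms(3), of \<zero> "\<zero>\<^bsub>M\<^esub>"] by simp
  finally show ?thesis using mod_homD(1)[OF assms(3)] by simp
qed

lemma mod_hom_neg:
  fixes R (structure)
  assumes "module R M" "module R N" "f \<in> mod_hom R M N" "x \<in> carrier M"
  shows "f (\<ominus>\<^bsub>M\<^esub> x) = \<ominus>\<^bsub>N\<^esub> f x"
proof -
  interpret M: module R M by fact
  interpret N: module R N by fact
  have "(\<ominus>\<one>) \<odot>\<^bsub>M\<^esub> x = \<ominus>\<^bsub>M\<^esub> x" using assms(4) by (simp add: M.smult_l_minus)
  moreover have "(\<ominus>\<one>) \<odot>\<^bsub>N\<^esub> f x = \<ominus>\<^bsub>N\<^esub> f x" using assms(4) mod_homD[OF assms(3)]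
    by (simp add: N.smult_l_minus)
  ultimately show ?thesis using mod_homD(3)[OF assms(3), of "\<ominus>\<one>" x] assms(4) by simp
qed

lemma mod_hom_minus:
  fixes R (structure)
  assumes "module R M" "module R N" "f \<in> mod_hom R M N" "x \<in> carrier M" "y \<in> carrier M"
  shows "f (x \<ominus>\<^bsub>M\<^esub> y) = f x \<ominus>\<^bsub>N\<^esub> f y"
proof -
  interpret M: module R M by fact
  interpret N: module R N by fact
  show ?thesis using assms mod_homD[OF assms(3)] mod_hom_neg[OF assms(1-3)]
    by (simp add: M.minus_eq N.minus_eq)
qed

lemma mod_hom_finsum:
  fixes R (structure)
  assumes "module R M" "module R N" "f \<in> mod_hom R M N" "finite A" "g \<in> A \<rightarrow> carrier M"
  shows "f (finsum M g A) = finsum N (\<lambda>i. f (g i)) A"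
  using assms(4,5)
proof (induct A rule: finite_induct)
  case empty
  interpret M: module R M by fact
  interpret N: module R N by fact
  show ?case using mod_hom_zero[OF assms(1-3)] by simp
next
  case (insert a A)
  interpret M: module R M by fact
  interpret N: module R N by fact
  have "g a \<in> carrier M" "g \<in> A \<rightarrow> carrier M" using insert by auto
  moreover have "(\<lambda>i. f (g i)) \<in> A \<rightarrow> carrier N" "f (g a) \<in> carrier N"
    using insert mod_homD(1)[OF assms(3)] by auto
  ultimately show ?case using insert mod_homD(2)[OF assms(3)] M.finsum_closed
    by (simp add: M.finsum_insert N.finsum_insert)
qed

section \<open>Linear extension\<close>

lemma free_support_sub:
  "c \<in> carrier (free_module R B) \<Longrightarrow> {b. c b \<noteq> \<zero>\<^bsub>R\<^esub>} \<subseteq> B"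
  by (auto simp: free_module_carrier)

lemma lin_ext_superset:
  fixes R (structure)
  assumes M: "module R M" and c: "c \<in> carrier (free_module R B)"
    and A: "finite A" "{b. c b \<noteq> \<zero>} \<subseteq> A" "v ` A \<subseteq> carrier M"
  shows "lin_ext R M v c = finsum M (\<lambda>b. c b \<odot>\<^bsub>M\<^esub> v b) A"
proof -
  interpret M: module R M by fact
  show ?thesis unfolding lin_ext_def
    by (rule M.add.finprod_mono_neutral_cong_left) (use A c in \<open>auto simp: free_module_carrier\<close>)
qed

lemma lin_ext_hom:
  fixes R (structure)
  assumes M: "module R M" and v: "v ` B \<subseteq> carrier M"
  shows "lin_ext R M v \<in> mod_hom R (free_module R B) M"
proof -
  interpret M: module R M by fact
  have FM: "module R (free_module R B)" by (rule free_module_module[OF M.is_cring])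
  interpret F: module R "free_module R B" by fact
  let ?S = "\<lambda>c. {b. c b \<noteq> \<zero>}"
  have fin: "finite (?S c)" "?S c \<subseteq> B" if "c \<in> carrier (free_module R B)" for c
    using that by (auto simp: free_module_carrier)
  show ?thesis
  proof (rule mod_homI)
    fix x assume x: "x \<in> carrier (free_module R B)"
    show "lin_ext R M v x \<in> carrier M" unfolding lin_ext_def
      by (rule M.finsum_closed) (use x v fin[OF x] in \<open>auto simp: free_module_carrier\<close>)
  next
    fix x y assume x: "x \<in> carrier (free_module R B)" and y: "y \<in> carrier (free_module R B)"
    let ?A = "?S x \<union> ?S y"
    have xy: "x \<oplus>\<^bsub>free_module R B\<^esub> y \<in> carrier (free_module R B)" by (rule F.a_closed[OF x y])
    have A: "finite ?A" "?A \<subseteq> B" using fin[OF x] fin[OF y] by auto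
    have vA: "v ` ?A \<subseteq> carrier M" "\<And>b. b \<in> ?A \<Longrightarrow> v b \<in> carrier M" using A v by blast+
    have cx: "\<And>b. x b \<in> carrier R" "\<And>b. y b \<in> carrier R" using x y by (auto simp: free_module_carrier)
    have "lin_ext R M v (x \<oplus>\<^bsub>free_module R B\<^esub> y) = finsum M (\<lambda>b. (x b \<oplus> y b) \<odot>\<^bsub>M\<^esub> v b) ?A"
      by (subst lin_ext_superset[OF M xy A(1)]) (use A vA cx in auto)
    also have "\<dots> = finsum M (\<lambda>b. x b \<odot>\<^bsub>M\<^esub> v b \<oplus>\<^bsub>M\<^esub> y b \<odot>\<^bsub>M\<^esub> v b) ?A"
      by (rule M.finsum_cong') (use A vA cx in \<open>auto simp: M.smult_l_distr\<close>)
    also have "\<dots> = finsum M (\<lambda>b. x b \<odot>\<^bsub>M\<^esub> v b) ?A \<oplus>\<^bsub>M\<^esub> finsum M (\<lambda>b. y b \<odot>\<^bsub>M\<^esub> v b) ?A"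
      by (rule M.finsum_addf) (use A vA cx in auto)
    also have "\<dots> = lin_ext R M v x \<oplus>\<^bsub>M\<^esub> lin_ext R M v y"
      by (subst (1 2) lin_ext_superset[OF M _ A(1)]) (use A vA x y in auto)
    finally show "lin_ext R M v (x \<oplus>\<^bsub>free_module R B\<^esub> y) = lin_ext R M v x \<oplus>\<^bsub>M\<^esub> lin_ext R M v y" .
  next
    fix a x assume a: "a \<in> carrier R" and x: "x \<in> carrier (free_module R B)"
    let ?A = "?S x"
    have ax: "a \<odot>\<^bsub>free_module R B\<^esub> x \<in> carrier (free_module R B)" by (rule F.smult_closed[OF a x])
    have A: "finite ?A" "?A \<subseteq> B" using fin[OF x] by auto
    have vA: "v ` ?A \<subseteq> carrier M" "\<And>b. b \<in> ?A \<Longrightarrow> v b \<in> carrier M" using A v by blast+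
    have cx: "\<And>b. x b \<in> carrier R" using x by (auto simp: free_module_carrier)
    have "lin_ext R M v (a \<odot>\<^bsub>free_module R B\<^esub> x) = finsum M (\<lambda>b. (a \<otimes> x b) \<odot>\<^bsub>M\<^esub> v b) ?A"
      by (subst lin_ext_superset[OF M ax A(1)]) (use A vA cx a in auto)
    also have "\<dots> = finsum M (\<lambda>b. a \<odot>\<^bsub>M\<^esub> (x b \<odot>\<^bsub>M\<^esub> v b)) ?A"
      by (rule M.finsum_cong') (use A vA cx a in \<open>auto simp: M.smult_assoc1\<close>)
    also have "\<dots> = a \<odot>\<^bsub>M\<^esub> finsum M (\<lambda>b. x b \<odot>\<^bsub>M\<^esub> v b) ?A"
      by (rule M.finsum_smult_ldistr[symmetric]) (use A vA cx a in auto)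
    also have "\<dots> = a \<odot>\<^bsub>M\<^esub> lin_ext R M v x" unfolding lin_ext_def ..
    finally show "lin_ext R M v (a \<odot>\<^bsub>free_module R B\<^esub> x) = a \<odot>\<^bsub>M\<^esub> lin_ext R M v x" .
  qed
qed

lemma fbasis_carrier:
  fixes R (structure)
  assumes "cring R" "b \<in> B" shows "fbasis R b \<in> carrier (free_module R B)"
proof -
  interpret cring R by fact
  have "{c. fbasis R b c \<noteq> \<zero>} \<subseteq> {b}" by (auto simp: fbasis_def)
  then show ?thesis using assms(2) by (auto simp: free_module_carrier fbasis_def intro: finite_subset)
qed

lemma lin_ext_fbasis:
  fixes R (structure)
  assumes M: "module R M" and ne: "\<one> \<noteq> \<zero>" and "v b \<in> carrier M"
  shows "lin_ext R M v (fbasis R b) = v b"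
proof -
  interpret M: module R M by fact
  have "{c. fbasis R b c \<noteq> \<zero>} = {b}" using ne by (auto simp: fbasis_def)
  then show ?thesis using assms unfolding lin_ext_def by (simp add: fbasis_def)
qed


section \<open>Induction principles\<close>

lemma free_induct:
  fixes R (structure)
  assumes cr: "cring R" and f: "f \<in> carrier (free_module R B)"
    and P0: "P (\<lambda>b. \<zero>)"
    and Pstep: "\<And>g b a. g \<in> carrier (free_module R B) \<Longrightarrow> b \<in> B \<Longrightarrow> a \<in> carrier R \<Longrightarrow> P g
        \<Longrightarrow> P (a \<odot>\<^bsub>free_module R B\<^esub> fbasis R b \<oplus>\<^bsub>free_module R B\<^esub> g)"
  shows "P f"
proof -
  interpret cring R by fact
  have fin: "finite {b. f b \<noteq> \<zero>}" using f by (simp add: free_module_carrier)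
  have "\<forall>f. f \<in> carrier (free_module R B) \<longrightarrow> {b. f b \<noteq> \<zero>} = S \<longrightarrow> P f" if "finite S" for S
    using that
  proof (induct S rule: finite_induct)
    case empty
    have "f = (\<lambda>b. \<zero>)" if "{b. f b \<noteq> \<zero>} = {}" for f using that by auto
    then show ?case using P0 by auto
  next
    case (insert b S)
    show ?case
    proof (intro allI impI)
      fix f assume f: "f \<in> carrier (free_module R B)" and S: "{b. f b \<noteq> \<zero>} = insert b S"
      let ?g = "f(b := \<zero>)"
      have fc: "\<And>c. f c \<in> carrier R" "\<And>c. c \<notin> B \<Longrightarrow> f c = \<zero>" using f by (auto simp: free_module_carrier)
      have bB: "b \<in> B" using S fc(2) by blast
      have gS: "{c. ?g c \<noteq> \<zero>} = S" using S insert(2) by auto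
      have g: "?g \<in> carrier (free_module R B)" using f gS insert(1) by (auto simp: free_module_carrier)
      have Pg: "P ?g" using insert(3) g gS by blast
      have eq: "f = f b \<odot>\<^bsub>free_module R B\<^esub> fbasis R b \<oplus>\<^bsub>free_module R B\<^esub> ?g"
        by (rule ext) (use fc in \<open>auto simp: fbasis_def\<close>)
      show "P f" by (subst eq, rule Pstep[OF g bB fc(1) Pg])
    qed
  qed
  then show ?thesis using fin f by blast
qed

lemma free_hom_eq:
  fixes R (structure)
  assumes M: "module R M"
    and h1: "h1 \<in> mod_hom R (free_module R B) M" and h2: "h2 \<in> mod_hom R (free_module R B) M"
    and eq: "\<And>b. b \<in> B \<Longrightarrow> h1 (fbasis R b) = h2 (fbasis R b)"
    and x: "x \<in> carrier (free_module R B)"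
  shows "h1 x = h2 x"
proof -
  interpret M: module R M by fact
  have F: "module R (free_module R B)" by (rule free_module_module[OF M.is_cring])
  interpret F: module R "free_module R B" by fact
  show ?thesis
  proof (rule free_induct[OF M.is_cring x])
    show "h1 (\<lambda>b. \<zero>) = h2 (\<lambda>b. \<zero>)"
      using mod_hom_zero[OF F M h1] mod_hom_zero[OF F M h2] by simp
  next
    fix g b a assume g: "g \<in> carrier (free_module R B)" and b: "b \<in> B" and a: "a \<in> carrier R"
      and Pg: "h1 g = h2 g"
    have e: "fbasis R b \<in> carrier (free_module R B)" by (rule fbasis_carrier[OF M.is_cring b])
    have ae: "a \<odot>\<^bsub>free_module R B\<^esub> fbasis R b \<in> carrier (free_module R B)" by (rule F.smult_closed[OF a e])
    show "h1 (a \<odot>\<^bsub>free_module R B\<^esub> fbasis R b \<oplus>\<^bsub>free_module R B\<^esub> g) =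
          h2 (a \<odot>\<^bsub>free_module R B\<^esub> fbasis R b \<oplus>\<^bsub>free_module R B\<^esub> g)"
      using mod_homD(2)[OF h1 ae g] mod_homD(2)[OF h2 ae g] mod_homD(3)[OF h1 a e] mod_homD(3)[OF h2 a e]
        eq[OF b] Pg by simp
  qed
qed

definition single :: "('a,'t) module \<Rightarrow> 'i \<Rightarrow> 't \<Rightarrow> ('i \<Rightarrow> 't)" where
  "single T i t = (\<lambda>j. if j = i then t else \<zero>\<^bsub>T\<^esub>)"

lemma copies_induct:
  fixes R (structure)
  assumes T: "module R T" and f: "f \<in> carrier (copies T I)"
    and P0: "P (\<lambda>i. \<zero>\<^bsub>T\<^esub>)"
    and Pstep: "\<And>g i t. g \<in> carrier (copies T I) \<Longrightarrow> i \<in> I \<Longrightarrow> t \<in> carrier T \<Longrightarrow> P g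
        \<Longrightarrow> P (single T i t \<oplus>\<^bsub>copies T I\<^esub> g)"
  shows "P f"
proof -
  interpret module R T by fact
  have fin: "finite {b. f b \<noteq> \<zero>\<^bsub>T\<^esub>}" using f by (simp add: copies_carrier)
  have "\<forall>f. f \<in> carrier (copies T I) \<longrightarrow> {b. f b \<noteq> \<zero>\<^bsub>T\<^esub>} = S \<longrightarrow> P f" if "finite S" for S
    using that
  proof (induct S rule: finite_induct)
    case empty
    have "f = (\<lambda>b. \<zero>\<^bsub>T\<^esub>)" if "{b. f b \<noteq> \<zero>\<^bsub>T\<^esub>} = {}" for f using that by auto
    then show ?case using P0 by auto
  next
    case (insert b S)
    show ?case
    proof (intro allI impI)
      fix f assume f: "f \<in> carrier (copies T I)" and S: "{b. f b \<noteq> \<zero>\<^bsub>T\<^esub>} = insert b S"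
      let ?g = "f(b := \<zero>\<^bsub>T\<^esub>)"
      have fc: "\<And>c. f c \<in> carrier T" "\<And>c. c \<notin> I \<Longrightarrow> f c = \<zero>\<^bsub>T\<^esub>" using f by (auto simp: copies_carrier)
      have bB: "b \<in> I" using S fc(2) by blast
      have gS: "{c. ?g c \<noteq> \<zero>\<^bsub>T\<^esub>} = S" using S insert(2) by auto
      have g: "?g \<in> carrier (copies T I)" using f gS insert(1) by (auto simp: copies_carrier)
      have Pg: "P ?g" using insert(3) g gS by blast
      have eq: "f = single T b (f b) \<oplus>\<^bsub>copies T I\<^esub> ?g"
        by (rule ext) (use fc in \<open>auto simp: single_def\<close>)
      show "P f" by (subst eq, rule Pstep[OF g bB fc(1) Pg])
    qed
  qed
  then show ?thesis using fin f by blast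
qed

lemma single_hom:
  fixes R (structure)
  assumes T: "module R T" and i: "i \<in> I"
  shows "single T i \<in> mod_hom R T (copies T I)"
proof -
  interpret module R T by fact
  show ?thesis
  proof (rule mod_homI)
    fix t assume t: "t \<in> carrier T"
    have "{j. single T i t j \<noteq> \<zero>\<^bsub>T\<^esub>} \<subseteq> {i}" by (auto simp: single_def)
    then show "single T i t \<in> carrier (copies T I)" using t i
      by (auto simp: copies_carrier single_def intro: finite_subset)
  qed (auto simp: single_def)
qed



section \<open>The submodule XI\<close>

lemma mip_finsum_Suc:
  fixes R (structure)
  assumes X: "module R X" and "I \<subseteq> carrier R" and "\<forall>j<Suc n. cs j \<in> I \<and> xs j \<in> carrier X"
  shows "finsum X (\<lambda>j. cs j \<odot>\<^bsub>X\<^esub> xs j) {..<Suc n} =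
         cs n \<odot>\<^bsub>X\<^esub> xs n \<oplus>\<^bsub>X\<^esub> finsum X (\<lambda>j. cs j \<odot>\<^bsub>X\<^esub> xs j) {..<n}"
proof -
  interpret module R X by fact
  have h: "\<And>j. j < Suc n \<Longrightarrow> cs j \<odot>\<^bsub>X\<^esub> xs j \<in> carrier X"
  proof -
    fix j assume "j < Suc n"
    then have "cs j \<in> I" "xs j \<in> carrier X" using assms(3) by auto
    then show "cs j \<odot>\<^bsub>X\<^esub> xs j \<in> carrier X" using assms(2) by (intro smult_closed) auto
  qed
  show ?thesis unfolding lessThan_Suc using h by (subst M.finsum_insert) auto
qed

lemma mip_zero:
  fixes R (structure)
  assumes X: "module R X" shows "\<zero>\<^bsub>X\<^esub> \<in> mod_ideal_prod R X I"
proof -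
  interpret module R X by fact
  show ?thesis unfolding mod_ideal_prod_def
    by (rule CollectI, rule exI[where x="0::nat"]) simp
qed

lemma mip_intro:
  assumes "\<forall>j<(n::nat). cs j \<in> I \<and> xs j \<in> carrier X"
  shows "finsum X (\<lambda>j. cs j \<odot>\<^bsub>X\<^esub> xs j) {..<n} \<in> mod_ideal_prod R X I"
  unfolding mod_ideal_prod_def
  apply (rule CollectI)
  apply (rule exI[where x=n], rule exI[where x=cs], rule exI[where x=xs])
  using assms by simp

lemma mip_step:
  fixes R (structure)
  assumes X: "module R X" and I: "I \<subseteq> carrier R"
    and y: "y \<in> mod_ideal_prod R X I" and i: "i \<in> I" and x: "x \<in> carrier X"
  shows "i \<odot>\<^bsub>X\<^esub> x \<oplus>\<^bsub>X\<^esub> y \<in> mod_ideal_prod R X I"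
proof -
  interpret module R X by fact
  obtain n cs xs where h: "\<forall>j<(n::nat). cs j \<in> I \<and> xs j \<in> carrier X"
    and yeq: "y = finsum X (\<lambda>j. cs j \<odot>\<^bsub>X\<^esub> xs j) {..<n}"
    using y unfolding mod_ideal_prod_def by blast
  let ?cs = "cs(n := i)" and ?xs = "xs(n := x)"
  have h': "\<forall>j<Suc n. ?cs j \<in> I \<and> ?xs j \<in> carrier X" using h i x by auto
  have "finsum X (\<lambda>j. ?cs j \<odot>\<^bsub>X\<^esub> ?xs j) {..<Suc n} =
        i \<odot>\<^bsub>X\<^esub> x \<oplus>\<^bsub>X\<^esub> finsum X (\<lambda>j. ?cs j \<odot>\<^bsub>X\<^esub> ?xs j) {..<n}"
    using mip_finsum_Suc[OF X I h'] by simp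
  also have "finsum X (\<lambda>j. ?cs j \<odot>\<^bsub>X\<^esub> ?xs j) {..<n} = y"
    unfolding yeq
  proof (rule M.finsum_cong')
    show "(\<lambda>j. cs j \<odot>\<^bsub>X\<^esub> xs j) \<in> {..<n} \<rightarrow> carrier X"
    proof
      fix j assume "j \<in> {..<n}"
      then have "cs j \<in> I" "xs j \<in> carrier X" using h by auto
      then show "cs j \<odot>\<^bsub>X\<^esub> xs j \<in> carrier X" using I by (intro smult_closed) auto
    qed
  qed auto
  finally show ?thesis using mip_intro[OF h'] by simp
qed


lemma mip_induct:
  fixes R (structure)
  assumes X: "module R X" and I: "I \<subseteq> carrier R"
    and y: "y \<in> mod_ideal_prod R X I"
    and P0: "P \<zero>\<^bsub>X\<^esub>"
    and Ps: "\<And>i x y. i \<in> I \<Longrightarrow> x \<in> carrier X \<Longrightarrow> y \<in> mod_ideal_prod R X I \<Longrightarrow> P y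
               \<Longrightarrow> P (i \<odot>\<^bsub>X\<^esub> x \<oplus>\<^bsub>X\<^esub> y)"
  shows "P y"
proof -
  interpret module R X by fact
  obtain n cs xs where h: "\<forall>j<(n::nat). cs j \<in> I \<and> xs j \<in> carrier X"
    and yeq: "y = finsum X (\<lambda>j. cs j \<odot>\<^bsub>X\<^esub> xs j) {..<n}"
    using y unfolding mod_ideal_prod_def by blast
  have "P (finsum X (\<lambda>j. cs j \<odot>\<^bsub>X\<^esub> xs j) {..<n}) \<and>
        finsum X (\<lambda>j. cs j \<odot>\<^bsub>X\<^esub> xs j) {..<n} \<in> mod_ideal_prod R X I" using h
  proof (induct n)
    case 0
    then show ?case using P0 mip_zero[OF X] by simp
  next
    case (Suc n)
    have h: "\<forall>j<n. cs j \<in> I \<and> xs j \<in> carrier X" using Suc(2) by auto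
    have "finsum X (\<lambda>j. cs j \<odot>\<^bsub>X\<^esub> xs j) {..<Suc n} =
         cs n \<odot>\<^bsub>X\<^esub> xs n \<oplus>\<^bsub>X\<^esub> finsum X (\<lambda>j. cs j \<odot>\<^bsub>X\<^esub> xs j) {..<n}"
      by (rule mip_finsum_Suc[OF X I Suc(2)])
    moreover have "cs n \<in> I" "xs n \<in> carrier X" using Suc(2) by auto
    moreover note IH = Suc(1)[OF h]
    ultimately show ?case using Ps[of "cs n" "xs n"] mip_step[OF X I _ \<open>cs n \<in> I\<close> \<open>xs n \<in> carrier X\<close>]
      by simp
  qed
  then show ?thesis using yeq by simp
qed

lemma mip_carrier:
  fixes R (structure)
  assumes X: "module R X" and I: "I \<subseteq> carrier R"
  shows "mod_ideal_prod R X I \<subseteq> carrier X"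
proof
  interpret module R X by fact
  fix y assume "y \<in> mod_ideal_prod R X I"
  then show "y \<in> carrier X" by (rule mip_induct[OF X I]) (use I in auto)
qed

lemma mip_add:
  fixes R (structure)
  assumes X: "module R X" and I: "I \<subseteq> carrier R"
    and y: "y \<in> mod_ideal_prod R X I" and z: "z \<in> mod_ideal_prod R X I"
  shows "y \<oplus>\<^bsub>X\<^esub> z \<in> mod_ideal_prod R X I"
proof -
  interpret module R X by fact
  show ?thesis
proof (rule mip_induct[OF X I y])
  show "\<zero>\<^bsub>X\<^esub> \<oplus>\<^bsub>X\<^esub> z \<in> mod_ideal_prod R X I" using z mip_carrier[OF X I] by auto
next
  fix i x y assume 2: "i \<in> I" "x \<in> carrier X" "y \<in> mod_ideal_prod R X I" "y \<oplus>\<^bsub>X\<^esub> z \<in> mod_ideal_prod R X I"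
  have "y \<in> carrier X" "z \<in> carrier X" using 2 z mip_carrier[OF X I] by auto
  then have "i \<odot>\<^bsub>X\<^esub> x \<oplus>\<^bsub>X\<^esub> y \<oplus>\<^bsub>X\<^esub> z = i \<odot>\<^bsub>X\<^esub> x \<oplus>\<^bsub>X\<^esub> (y \<oplus>\<^bsub>X\<^esub> z)"
    using 2 I by (simp add: M.a_assoc subsetD)
  then show "i \<odot>\<^bsub>X\<^esub> x \<oplus>\<^bsub>X\<^esub> y \<oplus>\<^bsub>X\<^esub> z \<in> mod_ideal_prod R X I" using mip_step[OF X I 2(4) 2(1,2)] by simp
qed
qed

lemma mip_smult:
  fixes R (structure)
  assumes X: "module R X" and I: "I \<subseteq> carrier R"
    and y: "y \<in> mod_ideal_prod R X I" and r: "r \<in> carrier R"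
  shows "r \<odot>\<^bsub>X\<^esub> y \<in> mod_ideal_prod R X I"
proof -
  interpret module R X by fact
  show ?thesis
proof (rule mip_induct[OF X I y])
  show "r \<odot>\<^bsub>X\<^esub> \<zero>\<^bsub>X\<^esub> \<in> mod_ideal_prod R X I" using r mip_zero[OF X] by simp
next
  fix i x y assume 2: "i \<in> I" "x \<in> carrier X" "y \<in> mod_ideal_prod R X I" "r \<odot>\<^bsub>X\<^esub> y \<in> mod_ideal_prod R X I"
  have yc: "y \<in> carrier X" using 2 mip_carrier[OF X I] by auto
  have ic: "i \<in> carrier R" using 2 I by auto
  have "r \<odot>\<^bsub>X\<^esub> (i \<odot>\<^bsub>X\<^esub> x \<oplus>\<^bsub>X\<^esub> y) = i \<odot>\<^bsub>X\<^esub> (r \<odot>\<^bsub>X\<^esub> x) \<oplus>\<^bsub>X\<^esub> r \<odot>\<^bsub>X\<^esub> y"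
  proof -
    have "r \<odot>\<^bsub>X\<^esub> (i \<odot>\<^bsub>X\<^esub> x) = i \<odot>\<^bsub>X\<^esub> (r \<odot>\<^bsub>X\<^esub> x)"
      using smult_assoc1[of r i x] smult_assoc1[of i r x] m_comm[of r i] ic r 2(2) by simp
    then show ?thesis using yc ic r 2(2) smult_r_distr[of r "i \<odot>\<^bsub>X\<^esub> x" y] by simp
  qed
  then show "r \<odot>\<^bsub>X\<^esub> (i \<odot>\<^bsub>X\<^esub> x \<oplus>\<^bsub>X\<^esub> y) \<in> mod_ideal_prod R X I" using mip_step[OF X I 2(4) 2(1)] r 2(2) by simp
qed
qed

lemma mip_mono:
  "I \<subseteq> J \<Longrightarrow> mod_ideal_prod R X I \<subseteq> mod_ideal_prod R X J"
  unfolding mod_ideal_prod_def by blast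

lemma mip_hom:
  fixes R (structure)
  assumes M: "module R M" and X: "module R X" and f: "f \<in> mod_hom R M X" and I: "I \<subseteq> carrier R"
    and y: "y \<in> mod_ideal_prod R M I"
  shows "f y \<in> mod_ideal_prod R X I"
proof -
  interpret M: module R M by fact
  show ?thesis
proof (rule mip_induct[OF M I y])
  show "f \<zero>\<^bsub>M\<^esub> \<in> mod_ideal_prod R X I" using mod_hom_zero[OF M X f] mip_zero[OF X] by simp
next
  fix i x y assume 2: "i \<in> I" "x \<in> carrier M" "y \<in> mod_ideal_prod R M I" "f y \<in> mod_ideal_prod R X I"
  have yc: "y \<in> carrier M" using 2 mip_carrier[OF M I] by auto
  have ic: "i \<in> carrier R" using 2 I by auto
  have "f (i \<odot>\<^bsub>M\<^esub> x \<oplus>\<^bsub>M\<^esub> y) = i \<odot>\<^bsub>X\<^esub> f x \<oplus>\<^bsub>X\<^esub> f y"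
    using mod_homD[OF f] yc ic 2(2) by simp
  then show "f (i \<odot>\<^bsub>M\<^esub> x \<oplus>\<^bsub>M\<^esub> y) \<in> mod_ideal_prod R X I" using mip_step[OF X I 2(4) 2(1)] mod_homD(1)[OF f 2(2)] by simp
qed
qed




section \<open>The construction\<close>

locale constr =
  fixes R (structure) and G :: "'a set set" and gens :: "'a set \<Rightarrow> 'a list"
  assumes cr: "cring R"
    and gab: "gabriel_filter R G"
    and ft: "finite_type R G"
    and gens_ok: "\<forall>I\<in>fgI R G. set (gens I) \<subseteq> carrier R \<and> Idl\<^bsub>R\<^esub> (set (gens I)) = I"
    and nontriv: "\<one> \<noteq> \<zero>"
begin

interpretation cring R by (rule cr)

abbreviation "F \<equiv> FG R G gens"
abbreviation "F' \<equiv> FG' R G gens"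
abbreviation "K \<equiv> KG R G gens"
abbreviation "Lm \<equiv> Lam R G gens"
abbreviation "fI \<equiv> fgI R G"
abbreviation "Cs \<equiv> sigma_src R G gens"
abbreviation "Bt \<equiv> sigma_tgt R G gens"
abbreviation "\<sigma> \<equiv> sigmaG R G gens"

lemma mod_F: "module R F" unfolding FG_def by (rule free_module_module[OF cr])
lemma mod_F': "module R F'" unfolding FG'_def by (rule free_module_module[OF cr])
lemma mod_K: "module R K" unfolding KG_def by (rule free_module_module[OF cr])
lemma mod_Cs: "module R Cs" unfolding sigma_src_def by (rule dsum_module[OF mod_K mod_K])
lemma mod_Bt: "module R Bt" unfolding sigma_tgt_def by (rule dsum_module[OF mod_F mod_F'])

lemma filt: "ideal_filter R G" using gab by (simp add: gabriel_filter_def)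

lemma ideal_G: "I \<in> G \<Longrightarrow> ideal I R"
  using filt unfolding ideal_filter_def by blast

lemma G_sub: "I \<in> G \<Longrightarrow> I \<subseteq> carrier R"
  using ideal_G[THEN ideal.axioms(1), THEN additive_subgroup.a_subset] by blast

lemma fI_G: "I \<in> fI \<Longrightarrow> I \<in> G" by (simp add: fgI_def)

lemma gens_carrier: "I \<in> fI \<Longrightarrow> k < length (gens I) \<Longrightarrow> gens I ! k \<in> carrier R"
proof -
  assume I: "I \<in> fI" and k: "k < length (gens I)"
  have "set (gens I) \<subseteq> carrier R" using gens_ok I by simp
  then show ?thesis using nth_mem[OF k] by blast
qed

lemma gens_in: "I \<in> fI \<Longrightarrow> k < length (gens I) \<Longrightarrow> gens I ! k \<in> I"
proof -
  assume I: "I \<in> fI" and k: "k < length (gens I)"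
  have "set (gens I) \<subseteq> carrier R" "Idl (set (gens I)) = I" using gens_ok I by auto
  then have "set (gens I) \<subseteq> I" using genideal_self by blast
  then show ?thesis using k by auto
qed

lemma fin_type_below: "J \<in> G \<Longrightarrow> \<exists>I\<in>fI. I \<subseteq> J"
  using ft by (auto simp: finite_type_def fgI_def)

lemma Lam_snoc: "l \<in> Lm \<Longrightarrow> I \<in> fI \<Longrightarrow> k < length (gens I) \<Longrightarrow> l @ [(I,k)] \<in> Lm"
  by (auto simp: Lam_def)

lemma Lam_snocD: "l @ [(I,k)] \<in> Lm \<Longrightarrow> l \<in> Lm \<and> I \<in> fI \<and> k < length (gens I)"
  by (auto simp: Lam_def)

lemma Lam_Nil: "[] \<in> Lm" by (simp add: Lam_def)

lemma F_carrier: "carrier F = carrier (free_module R Lm)" by (simp add: FG_def)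

lemma fbasis_F: "l \<in> Lm \<Longrightarrow> fbasis R l \<in> carrier F"
  unfolding FG_def by (rule fbasis_carrier[OF cr])

lemma fbasis_F': "l \<in> Lm \<Longrightarrow> l \<noteq> [] \<Longrightarrow> fbasis R l \<in> carrier F'"
  unfolding FG'_def by (rule fbasis_carrier[OF cr]) simp

lemma fbasis_K: "l \<in> Lm \<Longrightarrow> I \<in> fI \<Longrightarrow> fbasis R (l,I) \<in> carrier K"
  unfolding KG_def by (rule fbasis_carrier[OF cr]) simp

definition Ssum where
  "Ssum l I = finsum F (\<lambda>k. (gens I ! k) \<odot>\<^bsub>F\<^esub> fbasis R (l @ [(I,k)])) {..<length (gens I)}"

lemma Ssum_carrier: "l \<in> Lm \<Longrightarrow> I \<in> fI \<Longrightarrow> Ssum l I \<in> carrier F"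
proof -
  assume l: "l \<in> Lm" and I: "I \<in> fI"
  interpret M: module R F by (rule mod_F)
  show ?thesis unfolding Ssum_def
  proof (rule M.finsum_closed, rule Pi_I)
    fix k assume "k \<in> {..<length (gens I)}"
    then have k: "k < length (gens I)" by simp
    show "gens I ! k \<odot>\<^bsub>F\<^esub> fbasis R (l @ [(I, k)]) \<in> carrier F"
      by (rule M.smult_closed[OF gens_carrier[OF I k] fbasis_F[OF Lam_snoc[OF l I k]]])
  qed
qed

lemma phi_basis_eq: "phi_basis R G gens (l, I) = fbasis R l \<ominus>\<^bsub>F\<^esub> Ssum l I"
  by (simp add: phi_basis_def Ssum_def)

lemma phi_basis_carrier: "l \<in> Lm \<Longrightarrow> I \<in> fI \<Longrightarrow> phi_basis R G gens (l, I) \<in> carrier F"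
proof -
  assume l: "l \<in> Lm" and I: "I \<in> fI"
  interpret M: module R F by (rule mod_F)
  show ?thesis unfolding phi_basis_eq using Ssum_carrier[OF l I] fbasis_F[OF l] by simp
qed

lemma phiG_hom: "phiG R G gens \<in> mod_hom R K F"
proof -
  have "lin_ext R F (phi_basis R G gens) \<in> mod_hom R (free_module R (Lm \<times> fI)) F"
    by (rule lin_ext_hom[OF mod_F]) (use phi_basis_carrier in auto)
  then show ?thesis by (simp add: phiG_def KG_def)
qed

lemma phiG_basis:
  assumes l: "l \<in> Lm" and I: "I \<in> fI"
  shows "phiG R G gens (fbasis R (l,I)) = phi_basis R G gens (l, I)"
  unfolding phiG_def
  by (rule lin_ext_fbasis[where v="phi_basis R G gens" and b="(l,I)", OF mod_F nontriv phi_basis_carrier[OF l I]])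

lemma phiG_zero: "phiG R G gens \<zero>\<^bsub>K\<^esub> = \<zero>\<^bsub>F\<^esub>"
  by (rule mod_hom_zero[OF mod_K mod_F phiG_hom])

lemma projw_hom: "projw R \<in> mod_hom R F F'"
proof (rule mod_homI)
  fix x assume "x \<in> carrier F"
  then have x: "\<forall>b. x b \<in> carrier R" "\<forall>b. b \<notin> Lm \<longrightarrow> x b = \<zero>" "finite {b. x b \<noteq> \<zero>}"
    by (auto simp: FG_def free_module_carrier)
  have "{b. projw R x b \<noteq> \<zero>} \<subseteq> {b. x b \<noteq> \<zero>}" by (auto simp: projw_def)
  then have "finite {b. projw R x b \<noteq> \<zero>}" using x(3) by (rule finite_subset)
  then show "projw R x \<in> carrier F'" using x(1,2)
    by (simp add: FG'_def free_module_carrier projw_def)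
next
  fix x y assume "x \<in> carrier F" "y \<in> carrier F"
  show "projw R (x \<oplus>\<^bsub>F\<^esub> y) = projw R x \<oplus>\<^bsub>F'\<^esub> projw R y"
    unfolding FG_def FG'_def free_module_ops projw_def by (rule ext) simp
next
  fix a x assume a: "a \<in> carrier R" and "x \<in> carrier F"
  show "projw R (a \<odot>\<^bsub>F\<^esub> x) = a \<odot>\<^bsub>F'\<^esub> projw R x"
    unfolding FG_def FG'_def free_module_ops projw_def by (rule ext) (simp add: a)
qed

lemma projw_fbasis: "l \<noteq> [] \<Longrightarrow> projw R (fbasis R l) = fbasis R l"
  by (auto simp: projw_def fbasis_def)

lemma projw_fbasis_Nil: "projw R (fbasis R []) = \<zero>\<^bsub>F'\<^esub>"
  by (auto simp: projw_def fbasis_def FG'_def)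

lemma sigma_apply: "\<sigma> (a, b) = (phiG R G gens a, projw R (phiG R G gens b))"
  by (simp add: sigmaG_def phiG'_def)

end



context constr begin

interpretation cring R by (rule cr)

lemma K_ops:
  "f \<oplus>\<^bsub>K\<^esub> g = (\<lambda>b. f b \<oplus> g b)" "a \<odot>\<^bsub>K\<^esub> f = (\<lambda>b. a \<otimes> f b)" "\<zero>\<^bsub>K\<^esub> = (\<lambda>b. \<zero>)"
  by (simp_all add: KG_def)

lemma K_val: "f \<in> carrier K \<Longrightarrow> f b \<in> carrier R"
  unfolding KG_def free_module_carrier by (cases b) auto

lemma Cs_carrier: "carrier Cs = carrier K \<times> carrier K" by (simp add: sigma_src_def)
lemma Bt_carrier: "carrier Bt = carrier F \<times> carrier F'" by (simp add: sigma_tgt_def)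
lemma Cs_ops: "p \<oplus>\<^bsub>Cs\<^esub> q = (fst p \<oplus>\<^bsub>K\<^esub> fst q, snd p \<oplus>\<^bsub>K\<^esub> snd q)"
   "a \<odot>\<^bsub>Cs\<^esub> p = (a \<odot>\<^bsub>K\<^esub> fst p, a \<odot>\<^bsub>K\<^esub> snd p)" "\<zero>\<^bsub>Cs\<^esub> = (\<zero>\<^bsub>K\<^esub>, \<zero>\<^bsub>K\<^esub>)"
  by (simp_all add: sigma_src_def)
lemma Bt_ops: "p \<oplus>\<^bsub>Bt\<^esub> q = (fst p \<oplus>\<^bsub>F\<^esub> fst q, snd p \<oplus>\<^bsub>F'\<^esub> snd q)"
   "a \<odot>\<^bsub>Bt\<^esub> p = (a \<odot>\<^bsub>F\<^esub> fst p, a \<odot>\<^bsub>F'\<^esub> snd p)" "\<zero>\<^bsub>Bt\<^esub> = (\<zero>\<^bsub>F\<^esub>, \<zero>\<^bsub>F'\<^esub>)"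
  by (simp_all add: sigma_tgt_def)

lemma D_imp_Div:
  assumes X: "module R X" and D: "D_class R Cs Bt \<sigma> X"
  shows "Div R G X"
  unfolding Div_def
proof
  interpret X: module R X by fact
  interpret FM: module R F by (rule mod_F)
  interpret F'M: module R F' by (rule mod_F')
  interpret KM: module R K by (rule mod_K)
  fix J assume J: "J \<in> G"
  obtain I where I: "I \<in> fI" "I \<subseteq> J" using fin_type_below[OF J] by blast
  have Isub: "I \<subseteq> carrier R" using G_sub[OF fI_G[OF I(1)]] .
  have Jsub: "J \<subseteq> carrier R" using G_sub[OF J] .
  have main: "x \<in> mod_ideal_prod R X I" if x: "x \<in> carrier X" for x
  proof -
    define g where "g = (\<lambda>p::(('a set \<times> nat) list \<times> 'a set \<Rightarrow> 'a) \<times> (('a set \<times> nat) list \<times> 'a set \<Rightarrow> 'a). snd p ([], I) \<odot>\<^bsub>X\<^esub> x)"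
    have g: "g \<in> mod_hom R Cs X"
    proof (rule mod_homI)
      fix p assume "p \<in> carrier Cs"
      then show "g p \<in> carrier X" unfolding g_def Cs_carrier using x K_val by auto
    next
      fix p q assume "p \<in> carrier Cs" "q \<in> carrier Cs"
      then show "g (p \<oplus>\<^bsub>Cs\<^esub> q) = g p \<oplus>\<^bsub>X\<^esub> g q"
        unfolding g_def Cs_carrier Cs_ops K_ops using x K_val by (auto simp: X.smult_l_distr)
    next
      fix a p assume "a \<in> carrier R" "p \<in> carrier Cs"
      then show "g (a \<odot>\<^bsub>Cs\<^esub> p) = a \<odot>\<^bsub>X\<^esub> g p"
        unfolding g_def Cs_carrier Cs_ops K_ops using x K_val by (auto simp: X.smult_assoc1)
    qed
    have "\<exists>h\<in>mod_hom R Bt X. \<forall>a\<in>carrier Cs. h (\<sigma> a) = g a"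
      using D g unfolding D_class_def by (rule bspec)
    then obtain h where h: "h \<in> mod_hom R Bt X" and hs0: "\<forall>a\<in>carrier Cs. h (\<sigma> a) = g a"
      by (elim bexE)
    have hs: "\<And>a. a \<in> carrier Cs \<Longrightarrow> h (\<sigma> a) = g a" using hs0 by (elim ballE) auto
    define j where "j = (\<lambda>f::('a set \<times> nat) list \<Rightarrow> 'a. (\<zero>\<^bsub>F\<^esub>, projw R f))"
    have j: "j \<in> mod_hom R F Bt"
    proof (rule mod_homI)
      fix f assume "f \<in> carrier F"
      then show "j f \<in> carrier Bt" unfolding j_def Bt_carrier
        using mod_homD(1)[OF projw_hom] by simp
    next
      fix f f' assume "f \<in> carrier F" "f' \<in> carrier F"
      then show "j (f \<oplus>\<^bsub>F\<^esub> f') = j f \<oplus>\<^bsub>Bt\<^esub> j f'"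
        unfolding j_def Bt_ops using mod_homD(2)[OF projw_hom] by simp
    next
      fix a f assume "a \<in> carrier R" "f \<in> carrier F"
      then show "j (a \<odot>\<^bsub>F\<^esub> f) = a \<odot>\<^bsub>Bt\<^esub> j f"
        unfolding j_def Bt_ops using mod_homD(3)[OF projw_hom] by simp
    qed
    let ?hh = "h \<circ> j"
    have hh: "?hh \<in> mod_hom R F X" by (rule mod_hom_comp[OF j h])
    have eK: "fbasis R ([], I) \<in> carrier K" by (rule fbasis_K[OF Lam_Nil I(1)])
    have y: "(\<zero>\<^bsub>K\<^esub>, fbasis R ([], I)) \<in> carrier Cs" unfolding Cs_carrier using eK by simp
    have "\<sigma> (\<zero>\<^bsub>K\<^esub>, fbasis R ([], I)) = j (phi_basis R G gens ([], I))"
      unfolding sigma_apply j_def phiG_zero phiG_basis[OF Lam_Nil I(1)] ..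
    moreover have "g (\<zero>\<^bsub>K\<^esub>, fbasis R ([], I)) = x" unfolding g_def using x by (simp add: fbasis_def)
    ultimately have xeq: "x = ?hh (phi_basis R G gens ([], I))" using hs[OF y] by simp
    have e0: "fbasis R [] \<in> carrier F" by (rule fbasis_F[OF Lam_Nil])
    have S: "Ssum [] I \<in> carrier F" by (rule Ssum_carrier[OF Lam_Nil I(1)])
    have "?hh (phi_basis R G gens ([], I)) = ?hh (fbasis R []) \<ominus>\<^bsub>X\<^esub> ?hh (Ssum [] I)"
      unfolding phi_basis_eq by (rule mod_hom_minus[OF mod_F X hh e0 S])
    moreover have "?hh (fbasis R []) = \<zero>\<^bsub>X\<^esub>"
      using mod_hom_zero[OF mod_Bt X h] unfolding j_def Bt_ops by (simp add: projw_fbasis_Nil)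
    moreover have z: "?hh (Ssum [] I) \<in> mod_ideal_prod R X I"
    proof -
      have ek: "\<And>k. k < length (gens I) \<Longrightarrow> fbasis R ([] @ [(I, k)]) \<in> carrier F"
        using fbasis_F[OF Lam_snoc[OF Lam_Nil I(1)]] by blast
      have "?hh (Ssum [] I) = finsum X (\<lambda>k. ?hh ((gens I ! k) \<odot>\<^bsub>F\<^esub> fbasis R ([] @ [(I, k)]))) {..<length (gens I)}"
        unfolding Ssum_def
        by (rule mod_hom_finsum[OF mod_F X hh]) (use ek gens_carrier[OF I(1)] in auto)
      also have "\<dots> = finsum X (\<lambda>k. (gens I ! k) \<odot>\<^bsub>X\<^esub> ?hh (fbasis R ([] @ [(I, k)]))) {..<length (gens I)}"
        by (rule X.finsum_cong') (use ek gens_carrier[OF I(1)] mod_homD[OF hh] in auto)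
      also have "\<dots> \<in> mod_ideal_prod R X I"
        by (rule mip_intro) (use ek gens_in[OF I(1)] mod_homD[OF hh] in auto)
      finally show ?thesis .
    qed
    ultimately have "x = \<zero>\<^bsub>X\<^esub> \<ominus>\<^bsub>X\<^esub> ?hh (Ssum [] I)" using xeq by simp
    also have "\<dots> = (\<ominus> \<one>) \<odot>\<^bsub>X\<^esub> ?hh (Ssum [] I)"
    proof -
      have zc: "?hh (Ssum [] I) \<in> carrier X" using mip_carrier[OF X Isub] z by blast
      then show ?thesis by (simp add: X.smult_l_minus X.minus_eq)
    qed
    also have "\<dots> \<in> mod_ideal_prod R X I" by (rule mip_smult[OF X Isub z]) (rule a_inv_closed, rule one_closed)
    finally show ?thesis .
  qed
  show "mod_ideal_prod R X J = carrier X"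
  proof
    show "mod_ideal_prod R X J \<subseteq> carrier X" by (rule mip_carrier[OF X Jsub])
    show "carrier X \<subseteq> mod_ideal_prod R X J"
    proof
      fix x assume "x \<in> carrier X"
      then have "x \<in> mod_ideal_prod R X I" by (rule main)
      then show "x \<in> mod_ideal_prod R X J" using mip_mono[OF I(2)] by (rule subsetD[rotated])
    qed
  qed
qed

end


context constr begin

interpretation cring R by (rule cr)

definition Yset :: "('a,'x) module \<Rightarrow> 'a set \<Rightarrow> 'x set" where
  "Yset X I = {t \<in> carrier X. \<exists>ys. (\<forall>k<length (gens I). ys k \<in> carrier X) \<and>
      t = finsum X (\<lambda>k. (gens I ! k) \<odot>\<^bsub>X\<^esub> ys k) {..<length (gens I)}}"

lemma Yset_add:
  assumes X: "module R X" and I: "I \<in> fI" and s: "s \<in> Yset X I" and t: "t \<in> Yset X I"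
  shows "s \<oplus>\<^bsub>X\<^esub> t \<in> Yset X I"
proof -
  interpret X: module R X by fact
  obtain ys where ys: "\<forall>k<length (gens I). ys k \<in> carrier X"
    and seq: "s = finsum X (\<lambda>k. (gens I ! k) \<odot>\<^bsub>X\<^esub> ys k) {..<length (gens I)}"
    using s unfolding Yset_def by auto
  obtain zs where zs: "\<forall>k<length (gens I). zs k \<in> carrier X"
    and teq: "t = finsum X (\<lambda>k. (gens I ! k) \<odot>\<^bsub>X\<^esub> zs k) {..<length (gens I)}"
    using t unfolding Yset_def by auto
  have gc: "\<And>k. k < length (gens I) \<Longrightarrow> gens I ! k \<in> carrier R" by (rule gens_carrier[OF I])
  have "s \<oplus>\<^bsub>X\<^esub> t = finsum X (\<lambda>k. (gens I ! k) \<odot>\<^bsub>X\<^esub> ys k \<oplus>\<^bsub>X\<^esub> (gens I ! k) \<odot>\<^bsub>X\<^esub> zs k) {..<length (gens I)}"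
    unfolding seq teq by (rule X.finsum_addf[symmetric]) (use ys zs gc in auto)
  also have "\<dots> = finsum X (\<lambda>k. (gens I ! k) \<odot>\<^bsub>X\<^esub> (ys k \<oplus>\<^bsub>X\<^esub> zs k)) {..<length (gens I)}"
    by (rule X.finsum_cong') (use ys zs gc in \<open>auto simp: X.smult_r_distr\<close>)
  finally have eq: "s \<oplus>\<^bsub>X\<^esub> t = finsum X (\<lambda>k. (gens I ! k) \<odot>\<^bsub>X\<^esub> (ys k \<oplus>\<^bsub>X\<^esub> zs k)) {..<length (gens I)}" .
  have "s \<oplus>\<^bsub>X\<^esub> t \<in> carrier X" using s t unfolding Yset_def by auto
  then show ?thesis unfolding Yset_def using eq ys zs
    by (intro CollectI conjI exI[where x="\<lambda>k. ys k \<oplus>\<^bsub>X\<^esub> zs k"]) auto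
qed

lemma Yset_smult:
  assumes X: "module R X" and I: "I \<in> fI" and t: "t \<in> Yset X I" and r: "r \<in> carrier R"
  shows "r \<odot>\<^bsub>X\<^esub> t \<in> Yset X I"
proof -
  interpret X: module R X by fact
  obtain zs where zs: "\<forall>k<length (gens I). zs k \<in> carrier X"
    and teq: "t = finsum X (\<lambda>k. (gens I ! k) \<odot>\<^bsub>X\<^esub> zs k) {..<length (gens I)}"
    using t unfolding Yset_def by auto
  have gc: "\<And>k. k < length (gens I) \<Longrightarrow> gens I ! k \<in> carrier R" by (rule gens_carrier[OF I])
  have "r \<odot>\<^bsub>X\<^esub> t = finsum X (\<lambda>k. r \<odot>\<^bsub>X\<^esub> ((gens I ! k) \<odot>\<^bsub>X\<^esub> zs k)) {..<length (gens I)}"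
    unfolding teq by (rule X.finsum_smult_ldistr) (use zs gc r in auto)
  also have "\<dots> = finsum X (\<lambda>k. (gens I ! k) \<odot>\<^bsub>X\<^esub> (r \<odot>\<^bsub>X\<^esub> zs k)) {..<length (gens I)}"
  proof (rule X.finsum_cong')
    fix k assume "k \<in> {..<length (gens I)}"
    then have k: "gens I ! k \<in> carrier R" "zs k \<in> carrier X" using gc zs by auto
    show "r \<odot>\<^bsub>X\<^esub> ((gens I ! k) \<odot>\<^bsub>X\<^esub> zs k) = (gens I ! k) \<odot>\<^bsub>X\<^esub> (r \<odot>\<^bsub>X\<^esub> zs k)"
      using X.smult_assoc1[of r "gens I ! k" "zs k"] X.smult_assoc1[of "gens I ! k" r "zs k"] m_comm[of r "gens I ! k"] k r
      by simp
  qed (use zs gc r in auto)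
  finally have eq: "r \<odot>\<^bsub>X\<^esub> t = finsum X (\<lambda>k. (gens I ! k) \<odot>\<^bsub>X\<^esub> (r \<odot>\<^bsub>X\<^esub> zs k)) {..<length (gens I)}" .
  have "r \<odot>\<^bsub>X\<^esub> t \<in> carrier X" using t r unfolding Yset_def by auto
  then show ?thesis unfolding Yset_def using eq zs r
    by (intro CollectI conjI exI[where x="\<lambda>k. r \<odot>\<^bsub>X\<^esub> zs k"]) auto
qed

lemma Yset_zero:
  assumes X: "module R X" and I: "I \<in> fI"
  shows "\<zero>\<^bsub>X\<^esub> \<in> Yset X I"
proof -
  interpret X: module R X by fact
  have gc: "\<And>k. k < length (gens I) \<Longrightarrow> gens I ! k \<in> carrier R" by (rule gens_carrier[OF I])
  have "finsum X (\<lambda>k. (gens I ! k) \<odot>\<^bsub>X\<^esub> \<zero>\<^bsub>X\<^esub>) {..<length (gens I)} = finsum X (\<lambda>k. \<zero>\<^bsub>X\<^esub>) {..<length (gens I)}"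
    by (rule X.finsum_cong') (use gc in auto)
  also have "\<dots> = \<zero>\<^bsub>X\<^esub>" by (rule X.finsum_zero)
  finally have eq: "\<zero>\<^bsub>X\<^esub> = finsum X (\<lambda>k. (gens I ! k) \<odot>\<^bsub>X\<^esub> \<zero>\<^bsub>X\<^esub>) {..<length (gens I)}" by simp
  show ?thesis unfolding Yset_def using eq
    by (intro CollectI conjI exI[where x="\<lambda>k. \<zero>\<^bsub>X\<^esub>"]) auto
qed

lemma Yset_gen:
  assumes X: "module R X" and I: "I \<in> fI" and m: "m < length (gens I)" and x: "x \<in> carrier X"
  shows "(gens I ! m) \<odot>\<^bsub>X\<^esub> x \<in> Yset X I"
proof -
  interpret X: module R X by fact
  have gc: "\<And>k. k < length (gens I) \<Longrightarrow> gens I ! k \<in> carrier R" by (rule gens_carrier[OF I])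
  let ?ys = "\<lambda>k. if k = m then x else \<zero>\<^bsub>X\<^esub>"
  have "finsum X (\<lambda>k. (gens I ! k) \<odot>\<^bsub>X\<^esub> ?ys k) {..<length (gens I)} =
        finsum X (\<lambda>k. if m = k then (gens I ! k) \<odot>\<^bsub>X\<^esub> x else \<zero>\<^bsub>X\<^esub>) {..<length (gens I)}"
    by (rule X.finsum_cong') (use gc x in auto)
  also have "\<dots> = (gens I ! m) \<odot>\<^bsub>X\<^esub> x"
    by (rule X.add.finprod_singleton) (use m gc x in auto)
  finally have eq: "(gens I ! m) \<odot>\<^bsub>X\<^esub> x = finsum X (\<lambda>k. (gens I ! k) \<odot>\<^bsub>X\<^esub> ?ys k) {..<length (gens I)}" by simp
  have c: "(gens I ! m) \<odot>\<^bsub>X\<^esub> x \<in> carrier X" using x gc[OF m] by simp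
  have ex: "\<exists>ys. (\<forall>k<length (gens I). ys k \<in> carrier X) \<and>
      (gens I ! m) \<odot>\<^bsub>X\<^esub> x = finsum X (\<lambda>k. (gens I ! k) \<odot>\<^bsub>X\<^esub> ys k) {..<length (gens I)}"
    using eq x by (intro exI[where x="?ys"]) auto
  show ?thesis unfolding Yset_def by (intro CollectI conjI c ex)
qed

lemma Yset_ideal:
  assumes X: "module R X" and I: "I \<in> fI" and i: "i \<in> I" and x: "x \<in> carrier X"
  shows "i \<odot>\<^bsub>X\<^esub> x \<in> Yset X I"
proof -
  interpret X: module R X by fact
  define JJ where "JJ = {a \<in> carrier R. \<forall>x\<in>carrier X. a \<odot>\<^bsub>X\<^esub> x \<in> Yset X I}"
  have sg: "subgroup JJ (add_monoid R)"
  proof (rule subgroup.intro)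
    show "JJ \<subseteq> carrier (add_monoid R)" unfolding JJ_def by auto
  next
    fix a b assume "a \<in> JJ" "b \<in> JJ"
    then show "a \<otimes>\<^bsub>add_monoid R\<^esub> b \<in> JJ" unfolding JJ_def
      by (auto simp: X.smult_l_distr intro!: Yset_add[OF X I])
  next
    show "\<one>\<^bsub>add_monoid R\<^esub> \<in> JJ" unfolding JJ_def using Yset_zero[OF X I] by auto
  next
    fix a assume a: "a \<in> JJ"
    have "\<ominus> a \<in> JJ" unfolding JJ_def
    proof (intro CollectI conjI ballI)
      show "\<ominus> a \<in> carrier R" using a unfolding JJ_def by auto
    next
      fix x assume x: "x \<in> carrier X"
      have ac: "a \<in> carrier R" using a unfolding JJ_def by auto
      have "(\<ominus> a) \<odot>\<^bsub>X\<^esub> x = a \<odot>\<^bsub>X\<^esub> (\<ominus>\<^bsub>X\<^esub> x)" using ac x by (simp add: X.smult_l_minus X.smult_r_minus)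
      moreover have "\<ominus>\<^bsub>X\<^esub> x \<in> carrier X" using x by simp
      ultimately show "(\<ominus> a) \<odot>\<^bsub>X\<^esub> x \<in> Yset X I" using a unfolding JJ_def by auto
    qed
    then show "inv\<^bsub>add_monoid R\<^esub> a \<in> JJ" by (simp add: a_inv_def)
  qed
  have idl: "ideal JJ R"
  proof (rule idealI[OF ring_axioms sg])
    fix a r assume a: "a \<in> JJ" and r: "r \<in> carrier R"
    have ac: "a \<in> carrier R" using a unfolding JJ_def by auto
    show "r \<otimes> a \<in> JJ" unfolding JJ_def
    proof (intro CollectI conjI ballI)
      show "r \<otimes> a \<in> carrier R" using ac r by simp
      fix x assume x: "x \<in> carrier X"
      have "(r \<otimes> a) \<odot>\<^bsub>X\<^esub> x = r \<odot>\<^bsub>X\<^esub> (a \<odot>\<^bsub>X\<^esub> x)" using ac r x by (simp add: X.smult_assoc1)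
      then show "(r \<otimes> a) \<odot>\<^bsub>X\<^esub> x \<in> Yset X I" using Yset_smult[OF X I _ r] a x unfolding JJ_def by auto
    qed
    show "a \<otimes> r \<in> JJ" unfolding JJ_def
    proof (intro CollectI conjI ballI)
      show "a \<otimes> r \<in> carrier R" using ac r by simp
      fix x assume x: "x \<in> carrier X"
      have "(a \<otimes> r) \<odot>\<^bsub>X\<^esub> x = r \<odot>\<^bsub>X\<^esub> (a \<odot>\<^bsub>X\<^esub> x)"
        using ac r x X.smult_assoc1[of r a x] m_comm[of a r] by simp
      then show "(a \<otimes> r) \<odot>\<^bsub>X\<^esub> x \<in> Yset X I" using Yset_smult[OF X I _ r] a x unfolding JJ_def by auto
    qed
  qed
  have gs: "set (gens I) \<subseteq> JJ"
  proof
    fix c assume "c \<in> set (gens I)"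
    then obtain m where m: "m < length (gens I)" "c = gens I ! m" by (auto simp: in_set_conv_nth)
    then show "c \<in> JJ" unfolding JJ_def using gens_carrier[OF I m(1)] Yset_gen[OF X I m(1)] by auto
  qed
  have "I = Idl (set (gens I))" using gens_ok I by simp
  also have "\<dots> \<subseteq> JJ" by (rule genideal_minimal[OF idl gs])
  finally show ?thesis using i x unfolding JJ_def by auto
qed

lemma gen_rep:
  assumes X: "module R X" and Dv: "Div R G X" and I: "I \<in> fI" and t: "t \<in> carrier X"
  shows "\<exists>ys. (\<forall>k<length (gens I). ys k \<in> carrier X) \<and>
      t = finsum X (\<lambda>k. (gens I ! k) \<odot>\<^bsub>X\<^esub> ys k) {..<length (gens I)}"
proof -
  interpret X: module R X by fact
  have Isub: "I \<subseteq> carrier R" by (rule G_sub[OF fI_G[OF I]])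
  have "t \<in> mod_ideal_prod R X I" using Dv t fI_G[OF I] unfolding Div_def by auto
  then have "t \<in> Yset X I"
  proof (rule mip_induct[OF X Isub])
    show "\<zero>\<^bsub>X\<^esub> \<in> Yset X I" by (rule Yset_zero[OF X I])
  next
    fix i x y assume "i \<in> I" "x \<in> carrier X" "y \<in> mod_ideal_prod R X I" "y \<in> Yset X I"
    then show "i \<odot>\<^bsub>X\<^esub> x \<oplus>\<^bsub>X\<^esub> y \<in> Yset X I" by (intro Yset_add[OF X I] Yset_ideal[OF X I])
  qed
  then show ?thesis unfolding Yset_def by auto
qed


primrec treev :: "'x \<Rightarrow> ('p list \<Rightarrow> 'p \<Rightarrow> 'x \<Rightarrow> 'x) \<Rightarrow> 'p list \<Rightarrow> 'x" where
  "treev r step [] = r"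
| "treev r step (p # rl) = step (rev rl) p (treev r step rl)"

lemma tree_exists:
  assumes X: "module R X" and Dv: "Div R G X"
    and gg: "\<And>l I. l \<in> Lm \<Longrightarrow> I \<in> fI \<Longrightarrow> gg l I \<in> carrier X" and r: "r \<in> carrier X"
  shows "\<exists>v. v [] = r \<and> (\<forall>l\<in>Lm. v l \<in> carrier X) \<and>
     (\<forall>l\<in>Lm. \<forall>I\<in>fI. v l \<ominus>\<^bsub>X\<^esub> finsum X (\<lambda>k. (gens I ! k) \<odot>\<^bsub>X\<^esub> v (l @ [(I,k)])) {..<length (gens I)} = gg l I)"
proof -
  interpret X: module R X by fact
  let ?P = "\<lambda>t I ys. (\<forall>k<length (gens I). ys k \<in> carrier X) \<and>
      t = finsum X (\<lambda>k. (gens I ! k) \<odot>\<^bsub>X\<^esub> ys k) {..<length (gens I)}"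
  define ch where "ch t I = (SOME ys. ?P t I ys)" for t I
  have ch: "?P t I (ch t I)" if "t \<in> carrier X" "I \<in> fI" for t I
    unfolding ch_def by (rule someI_ex[OF gen_rep[OF X Dv that(2,1)]])
  define step where "step l p t = ch (t \<ominus>\<^bsub>X\<^esub> gg l (fst p)) (fst p) (snd p)" for l p t
  define v where "v l = treev r step (rev l)" for l
  have v_snoc: "v (l @ [(I,k)]) = ch (v l \<ominus>\<^bsub>X\<^esub> gg l I) I k" for l I k
    unfolding v_def step_def by simp
  have v_nil: "v [] = r" unfolding v_def by simp
  have vc: "l \<in> Lm \<Longrightarrow> v l \<in> carrier X" for l
  proof (induct l rule: rev_induct)
    case Nil then show ?case using v_nil r by simp
  next
    case (snoc p l)
    obtain I k where p: "p = (I,k)" by (cases p)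
    have h: "l \<in> Lm" "I \<in> fI" "k < length (gens I)" using Lam_snocD snoc(2) unfolding p by auto
    have "v l \<ominus>\<^bsub>X\<^esub> gg l I \<in> carrier X" using snoc(1)[OF h(1)] gg[OF h(1,2)] by simp
    then show ?case unfolding p v_snoc using ch h(2,3) by auto
  qed
  have veq: "v l \<ominus>\<^bsub>X\<^esub> finsum X (\<lambda>k. (gens I ! k) \<odot>\<^bsub>X\<^esub> v (l @ [(I,k)])) {..<length (gens I)} = gg l I"
    if l: "l \<in> Lm" and I: "I \<in> fI" for l I
  proof -
    let ?t = "v l \<ominus>\<^bsub>X\<^esub> gg l I"
    have vl: "v l \<in> carrier X" and gl: "gg l I \<in> carrier X" using vc[OF l] gg[OF l I] by auto
    have tc: "?t \<in> carrier X" using vl gl by simp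
    note c = ch[OF tc I]
    have "finsum X (\<lambda>k. (gens I ! k) \<odot>\<^bsub>X\<^esub> v (l @ [(I,k)])) {..<length (gens I)} =
          finsum X (\<lambda>k. (gens I ! k) \<odot>\<^bsub>X\<^esub> ch ?t I k) {..<length (gens I)}"
      unfolding v_snoc ..
    also have "\<dots> = ?t" using c by simp
    finally have "finsum X (\<lambda>k. (gens I ! k) \<odot>\<^bsub>X\<^esub> v (l @ [(I,k)])) {..<length (gens I)} = ?t" .
    then show ?thesis using vl gl
      by (simp add: X.minus_eq X.minus_add X.minus_minus X.a_assoc[symmetric] X.r_neg)
  qed
  show ?thesis using v_nil vc veq by blast
qed


lemma hom_phi_basis:
  assumes X: "module R X" and L: "L \<in> mod_hom R F X" and l: "l \<in> Lm" and I: "I \<in> fI"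
  shows "L (phi_basis R G gens (l,I)) = L (fbasis R l) \<ominus>\<^bsub>X\<^esub>
           finsum X (\<lambda>k. (gens I ! k) \<odot>\<^bsub>X\<^esub> L (fbasis R (l @ [(I,k)]))) {..<length (gens I)}"
proof -
  interpret X: module R X by fact
  interpret FM: module R F by (rule mod_F)
  have ek: "\<And>k. k < length (gens I) \<Longrightarrow> fbasis R (l @ [(I, k)]) \<in> carrier F"
    using fbasis_F[OF Lam_snoc[OF l I]] by blast
  have gc: "\<And>k. k < length (gens I) \<Longrightarrow> gens I ! k \<in> carrier R" by (rule gens_carrier[OF I])
  have "L (phi_basis R G gens (l,I)) = L (fbasis R l) \<ominus>\<^bsub>X\<^esub> L (Ssum l I)"
    unfolding phi_basis_eq by (rule mod_hom_minus[OF mod_F X L fbasis_F[OF l] Ssum_carrier[OF l I]])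
  also have "L (Ssum l I) = finsum X (\<lambda>k. L ((gens I ! k) \<odot>\<^bsub>F\<^esub> fbasis R (l @ [(I, k)]))) {..<length (gens I)}"
    unfolding Ssum_def by (rule mod_hom_finsum[OF mod_F X L]) (use ek gc in auto)
  also have "\<dots> = finsum X (\<lambda>k. (gens I ! k) \<odot>\<^bsub>X\<^esub> L (fbasis R (l @ [(I, k)]))) {..<length (gens I)}"
    by (rule X.finsum_cong') (use ek gc mod_homD[OF L] in auto)
  finally show ?thesis .
qed

lemma lin_ext_projw:
  assumes X: "module R X" and v0: "v [] = \<zero>\<^bsub>X\<^esub>" and v: "v ` Lm \<subseteq> carrier X" and f: "f \<in> carrier F"
  shows "lin_ext R X v (projw R f) = lin_ext R X v f"
proof -
  interpret X: module R X by fact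
  have fF: "f \<in> carrier (free_module R Lm)" using f by (simp add: FG_def)
  have pF: "projw R f \<in> carrier (free_module R Lm)" using mod_homD(1)[OF projw_hom f]
    by (auto simp: FG'_def FG_def free_module_carrier)
  let ?A = "{b. f b \<noteq> \<zero>}"
  have A: "finite ?A" "?A \<subseteq> Lm" using fF by (auto simp: free_module_carrier)
  have vA: "v ` ?A \<subseteq> carrier X" using A v by blast
  have fc: "\<And>b. f b \<in> carrier R" using fF by (simp add: free_module_carrier)
  have "lin_ext R X v (projw R f) = finsum X (\<lambda>b. projw R f b \<odot>\<^bsub>X\<^esub> v b) ?A"
    by (rule lin_ext_superset[OF X pF A(1) _ vA]) (auto simp: projw_def)
  also have "\<dots> = finsum X (\<lambda>b. f b \<odot>\<^bsub>X\<^esub> v b) ?A"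
  proof (rule X.finsum_cong')
    fix b assume b: "b \<in> ?A"
    then have "v b \<in> carrier X" using vA by blast
    then show "projw R f b \<odot>\<^bsub>X\<^esub> v b = f b \<odot>\<^bsub>X\<^esub> v b" using v0 fc[of b]
      by (cases "b = []") (auto simp: projw_def)
  next
    show "(\<lambda>b. f b \<odot>\<^bsub>X\<^esub> v b) \<in> ?A \<rightarrow> carrier X"
    proof
      fix b assume "b \<in> ?A"
      then have "v b \<in> carrier X" using vA by blast
      then show "f b \<odot>\<^bsub>X\<^esub> v b \<in> carrier X" using fc[of b] by simp
    qed
  qed simp
  also have "\<dots> = lin_ext R X v f" by (rule lin_ext_superset[OF X fF A(1) _ vA, symmetric]) simp
  finally show ?thesis .
qed


lemma lin_ext_F_hom:
  assumes X: "module R X" and v: "\<forall>l\<in>Lm. v l \<in> carrier X"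
  shows "lin_ext R X v \<in> mod_hom R F X"
  unfolding FG_def by (rule lin_ext_hom[OF X]) (use v in blast)

lemma lin_ext_F'_hom:
  assumes X: "module R X" and v: "\<forall>l\<in>Lm. v l \<in> carrier X"
  shows "lin_ext R X v \<in> mod_hom R F' X"
  unfolding FG'_def by (rule lin_ext_hom[OF X]) (use v in blast)

lemma K_hom_eq:
  assumes X: "module R X" and h1: "h1 \<in> mod_hom R K X" and h2: "h2 \<in> mod_hom R K X"
    and eq: "\<And>l I. l \<in> Lm \<Longrightarrow> I \<in> fI \<Longrightarrow> h1 (fbasis R (l,I)) = h2 (fbasis R (l,I))"
    and a: "a \<in> carrier K"
  shows "h1 a = h2 a"
proof -
  have h1': "h1 \<in> mod_hom R (free_module R (Lm \<times> fI)) X" using h1 by (simp add: KG_def)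
  have h2': "h2 \<in> mod_hom R (free_module R (Lm \<times> fI)) X" using h2 by (simp add: KG_def)
  have a': "a \<in> carrier (free_module R (Lm \<times> fI))" using a by (simp add: KG_def)
  show ?thesis
  proof (rule free_hom_eq[OF X h1' h2' _ a'])
    fix b assume "b \<in> Lm \<times> fI"
    then obtain l I where "b = (l,I)" "l \<in> Lm" "I \<in> fI" by auto
    then show "h1 (fbasis R b) = h2 (fbasis R b)" using eq by simp
  qed
qed

lemma extend:
  assumes X: "module R X" and Dv: "Div R G X" and g: "g \<in> mod_hom R Cs X" and r: "r \<in> carrier X"
  shows "\<exists>h\<in>mod_hom R Bt X. (\<forall>a\<in>carrier Cs. h (\<sigma> a) = g a) \<and> h (fbasis R [], \<zero>\<^bsub>F'\<^esub>) = r"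
proof -
  interpret X: module R X by fact
  interpret FM: module R F by (rule mod_F)
  interpret F'M: module R F' by (rule mod_F')
  interpret KM: module R K by (rule mod_K)
  define i1 where "i1 = (\<lambda>a::('a set \<times> nat) list \<times> 'a set \<Rightarrow> 'a. (a, \<zero>\<^bsub>K\<^esub>))"
  define i2 where "i2 = (\<lambda>a::('a set \<times> nat) list \<times> 'a set \<Rightarrow> 'a. (\<zero>\<^bsub>K\<^esub>, a))"
  have i1: "i1 \<in> mod_hom R K Cs"
    by (rule mod_homI) (simp_all add: i1_def Cs_carrier Cs_ops)
  have i2: "i2 \<in> mod_hom R K Cs"
    by (rule mod_homI) (simp_all add: i2_def Cs_carrier Cs_ops)
  have g1: "g \<circ> i1 \<in> mod_hom R K X" by (rule mod_hom_comp[OF i1 g])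
  have g2: "g \<circ> i2 \<in> mod_hom R K X" by (rule mod_hom_comp[OF i2 g])
  have gg1: "(g \<circ> i1) (fbasis R (l,I)) \<in> carrier X" if "l \<in> Lm" "I \<in> fI" for l I
    by (rule mod_homD(1)[OF g1 fbasis_K[OF that]])
  have gg2: "(g \<circ> i2) (fbasis R (l,I)) \<in> carrier X" if "l \<in> Lm" "I \<in> fI" for l I
    by (rule mod_homD(1)[OF g2 fbasis_K[OF that]])
  obtain v where v0: "v [] = r" and vc: "\<forall>l\<in>Lm. v l \<in> carrier X"
    and veq: "\<forall>l\<in>Lm. \<forall>I\<in>fI. v l \<ominus>\<^bsub>X\<^esub> finsum X (\<lambda>k. (gens I ! k) \<odot>\<^bsub>X\<^esub> v (l @ [(I,k)])) {..<length (gens I)}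
                 = (g \<circ> i1) (fbasis R (l,I))"
    using tree_exists[where gg="\<lambda>l I. (g \<circ> i1) (fbasis R (l,I))", OF X Dv gg1 r] by blast
  obtain w where w0: "w [] = \<zero>\<^bsub>X\<^esub>" and wc: "\<forall>l\<in>Lm. w l \<in> carrier X"
    and weq: "\<forall>l\<in>Lm. \<forall>I\<in>fI. w l \<ominus>\<^bsub>X\<^esub> finsum X (\<lambda>k. (gens I ! k) \<odot>\<^bsub>X\<^esub> w (l @ [(I,k)])) {..<length (gens I)}
                 = (g \<circ> i2) (fbasis R (l,I))"
    using tree_exists[where gg="\<lambda>l I. (g \<circ> i2) (fbasis R (l,I))", OF X Dv gg2 X.zero_closed] by blast
  have Lv: "lin_ext R X v \<in> mod_hom R F X" by (rule lin_ext_F_hom[OF X vc])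
  have Lw: "lin_ext R X w \<in> mod_hom R F X" by (rule lin_ext_F_hom[OF X wc])
  have Lw': "lin_ext R X w \<in> mod_hom R F' X" by (rule lin_ext_F'_hom[OF X wc])
  define h where "h = (\<lambda>p. lin_ext R X v (fst p) \<oplus>\<^bsub>X\<^esub> lin_ext R X w (snd p))"
  have h: "h \<in> mod_hom R Bt X"
  proof (rule mod_homI)
    fix p assume "p \<in> carrier Bt"
    then show "h p \<in> carrier X" unfolding h_def Bt_carrier using mod_homD(1)[OF Lv] mod_homD(1)[OF Lw'] by auto
  next
    fix p q assume p: "p \<in> carrier Bt" and q: "q \<in> carrier Bt"
    then have c: "lin_ext R X v (fst p) \<in> carrier X" "lin_ext R X v (fst q) \<in> carrier X"
         "lin_ext R X w (snd p) \<in> carrier X" "lin_ext R X w (snd q) \<in> carrier X"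
      unfolding Bt_carrier using mod_homD(1)[OF Lv] mod_homD(1)[OF Lw'] by auto
    have pc: "fst p \<in> carrier F" "snd p \<in> carrier F'" "fst q \<in> carrier F" "snd q \<in> carrier F'"
      using p q unfolding Bt_carrier by auto
    show "h (p \<oplus>\<^bsub>Bt\<^esub> q) = h p \<oplus>\<^bsub>X\<^esub> h q"
      unfolding h_def Bt_ops using c
      by (simp add: mod_homD(2)[OF Lv pc(1,3)] mod_homD(2)[OF Lw' pc(2,4)] X.a_ac)
  next
    fix a p assume a: "a \<in> carrier R" and p: "p \<in> carrier Bt"
    then have c: "lin_ext R X v (fst p) \<in> carrier X" "lin_ext R X w (snd p) \<in> carrier X"
      unfolding Bt_carrier using mod_homD(1)[OF Lv] mod_homD(1)[OF Lw'] by auto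
    have pc: "fst p \<in> carrier F" "snd p \<in> carrier F'"
      using p unfolding Bt_carrier by auto
    show "h (a \<odot>\<^bsub>Bt\<^esub> p) = a \<odot>\<^bsub>X\<^esub> h p"
      unfolding h_def Bt_ops using a c
      by (simp add: mod_homD(3)[OF Lv a pc(1)] mod_homD(3)[OF Lw' a pc(2)] X.smult_r_distr)
  qed
  have H1: "lin_ext R X v (phiG R G gens a) = (g \<circ> i1) a" if a: "a \<in> carrier K" for a
  proof -
    have "(lin_ext R X v \<circ> phiG R G gens) a = (g \<circ> i1) a"
    proof (rule K_hom_eq[OF X mod_hom_comp[OF phiG_hom Lv] g1 _ a])
      fix l I assume l: "l \<in> Lm" and I: "I \<in> fI"
      have ek: "\<And>k. k < length (gens I) \<Longrightarrow> l @ [(I, k)] \<in> Lm" using Lam_snoc[OF l I] by blast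
      have "(lin_ext R X v \<circ> phiG R G gens) (fbasis R (l, I)) = lin_ext R X v (phi_basis R G gens (l,I))"
        by (simp add: phiG_basis[OF l I])
      also have "\<dots> = v l \<ominus>\<^bsub>X\<^esub> finsum X (\<lambda>k. (gens I ! k) \<odot>\<^bsub>X\<^esub> v (l @ [(I,k)])) {..<length (gens I)}"
      proof -
        have "\<And>k. k \<in> {..<length (gens I)} \<Longrightarrow> lin_ext R X v (fbasis R (l @ [(I, k)])) = v (l @ [(I,k)])"
        proof -
          fix k assume "k \<in> {..<length (gens I)}"
          then have "l @ [(I,k)] \<in> Lm" using ek by simp
          then have "v (l @ [(I,k)]) \<in> carrier X" using vc by blast
          then show "lin_ext R X v (fbasis R (l @ [(I, k)])) = v (l @ [(I,k)])" by (rule lin_ext_fbasis[OF X nontriv])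
        qed
        then have fs: "finsum X (\<lambda>k. (gens I ! k) \<odot>\<^bsub>X\<^esub> lin_ext R X v (fbasis R (l @ [(I, k)]))) {..<length (gens I)}
           = finsum X (\<lambda>k. (gens I ! k) \<odot>\<^bsub>X\<^esub> v (l @ [(I,k)])) {..<length (gens I)}"
        proof (intro X.finsum_cong' refl)
          show "(\<lambda>k. (gens I ! k) \<odot>\<^bsub>X\<^esub> v (l @ [(I,k)])) \<in> {..<length (gens I)} \<rightarrow> carrier X"
          proof
            fix k assume "k \<in> {..<length (gens I)}"
            then have "l @ [(I,k)] \<in> Lm" "gens I ! k \<in> carrier R" using ek gens_carrier[OF I] by auto
            then show "(gens I ! k) \<odot>\<^bsub>X\<^esub> v (l @ [(I,k)]) \<in> carrier X" using vc by simp
          qed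
        qed simp
        have fl: "lin_ext R X v (fbasis R l) = v l" by (rule lin_ext_fbasis[where v=v and b=l, OF X nontriv bspec[OF vc l]])
        show ?thesis unfolding hom_phi_basis[OF X Lv l I] fs fl ..
      qed
      also have "\<dots> = (g \<circ> i1) (fbasis R (l, I))" using veq l I by blast
      finally show "(lin_ext R X v \<circ> phiG R G gens) (fbasis R (l, I)) = (g \<circ> i1) (fbasis R (l, I))" .
    qed
    then show ?thesis by simp
  qed
  have H2: "lin_ext R X w (phiG R G gens a) = (g \<circ> i2) a" if a: "a \<in> carrier K" for a
  proof -
    have "(lin_ext R X w \<circ> phiG R G gens) a = (g \<circ> i2) a"
    proof (rule K_hom_eq[OF X mod_hom_comp[OF phiG_hom Lw] g2 _ a])
      fix l I assume l: "l \<in> Lm" and I: "I \<in> fI"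
      have ek: "\<And>k. k < length (gens I) \<Longrightarrow> l @ [(I, k)] \<in> Lm" using Lam_snoc[OF l I] by blast
      have "(lin_ext R X w \<circ> phiG R G gens) (fbasis R (l, I)) = lin_ext R X w (phi_basis R G gens (l,I))"
        by (simp add: phiG_basis[OF l I])
      also have "\<dots> = w l \<ominus>\<^bsub>X\<^esub> finsum X (\<lambda>k. (gens I ! k) \<odot>\<^bsub>X\<^esub> w (l @ [(I,k)])) {..<length (gens I)}"
      proof -
        have "\<And>k. k \<in> {..<length (gens I)} \<Longrightarrow> lin_ext R X w (fbasis R (l @ [(I, k)])) = w (l @ [(I,k)])"
        proof -
          fix k assume "k \<in> {..<length (gens I)}"
          then have "l @ [(I,k)] \<in> Lm" using ek by simp
          then have "w (l @ [(I,k)]) \<in> carrier X" using wc by blast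
          then show "lin_ext R X w (fbasis R (l @ [(I, k)])) = w (l @ [(I,k)])" by (rule lin_ext_fbasis[OF X nontriv])
        qed
        then have fs: "finsum X (\<lambda>k. (gens I ! k) \<odot>\<^bsub>X\<^esub> lin_ext R X w (fbasis R (l @ [(I, k)]))) {..<length (gens I)}
           = finsum X (\<lambda>k. (gens I ! k) \<odot>\<^bsub>X\<^esub> w (l @ [(I,k)])) {..<length (gens I)}"
        proof (intro X.finsum_cong' refl)
          show "(\<lambda>k. (gens I ! k) \<odot>\<^bsub>X\<^esub> w (l @ [(I,k)])) \<in> {..<length (gens I)} \<rightarrow> carrier X"
          proof
            fix k assume "k \<in> {..<length (gens I)}"
            then have "l @ [(I,k)] \<in> Lm" "gens I ! k \<in> carrier R" using ek gens_carrier[OF I] by auto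
            then show "(gens I ! k) \<odot>\<^bsub>X\<^esub> w (l @ [(I,k)]) \<in> carrier X" using wc by simp
          qed
        qed simp
        have fl: "lin_ext R X w (fbasis R l) = w l" by (rule lin_ext_fbasis[where v=w and b=l, OF X nontriv bspec[OF wc l]])
        show ?thesis unfolding hom_phi_basis[OF X Lw l I] fs fl ..
      qed
      also have "\<dots> = (g \<circ> i2) (fbasis R (l, I))" using weq l I by blast
      finally show "(lin_ext R X w \<circ> phiG R G gens) (fbasis R (l, I)) = (g \<circ> i2) (fbasis R (l, I))" .
    qed
    then show ?thesis by simp
  qed
  have wimg: "w ` Lm \<subseteq> carrier X" using wc by blast
  have hs: "h (\<sigma> p) = g p" if p: "p \<in> carrier Cs" for p
  proof -
    obtain a b where ab: "p = (a,b)" "a \<in> carrier K" "b \<in> carrier K" using p unfolding Cs_carrier by auto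
    have pb: "phiG R G gens b \<in> carrier F" by (rule mod_homD(1)[OF phiG_hom ab(3)])
    have "h (\<sigma> p) = lin_ext R X v (phiG R G gens a) \<oplus>\<^bsub>X\<^esub> lin_ext R X w (phiG R G gens b)"
      unfolding h_def ab(1) sigma_apply using lin_ext_projw[OF X w0 wimg pb] by simp
    also have "\<dots> = g (i1 a) \<oplus>\<^bsub>X\<^esub> g (i2 b)" using H1[OF ab(2)] H2[OF ab(3)] by simp
    also have "\<dots> = g (i1 a \<oplus>\<^bsub>Cs\<^esub> i2 b)"
      by (rule mod_homD(2)[OF g, symmetric]) (use ab in \<open>simp_all add: i1_def i2_def Cs_carrier\<close>)
    also have "i1 a \<oplus>\<^bsub>Cs\<^esub> i2 b = p" using ab by (simp add: i1_def i2_def Cs_ops)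
    finally show ?thesis .
  qed
  have hr: "h (fbasis R [], \<zero>\<^bsub>F'\<^esub>) = r"
  proof -
    have "lin_ext R X v (fbasis R []) = r"
      using lin_ext_fbasis[where v=v and b="[]", OF X nontriv bspec[OF vc Lam_Nil]] v0 by simp
    moreover have "lin_ext R X w \<zero>\<^bsub>F'\<^esub> = \<zero>\<^bsub>X\<^esub>" by (rule mod_hom_zero[OF mod_F' X Lw'])
    ultimately show ?thesis unfolding h_def using r by simp
  qed
  show ?thesis using h hs hr by blast
qed

lemma Div_imp_D:
  assumes X: "module R X" and Dv: "Div R G X"
  shows "D_class R Cs Bt \<sigma> X"
  unfolding D_class_def
proof
  interpret X: module R X by fact
  fix g assume g: "g \<in> mod_hom R Cs X"
  obtain h where "h \<in> mod_hom R Bt X" "\<forall>a\<in>carrier Cs. h (\<sigma> a) = g a"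
    using extend[OF X Dv g X.zero_closed] by blast
  then show "\<exists>h\<in>mod_hom R Bt X. \<forall>a\<in>carrier Cs. h (\<sigma> a) = g a" by (intro bexI)
qed

end


lemma minus_zero_eq:
  fixes R (structure)
  assumes X: "module R X" and a: "a \<in> carrier X" and b: "b \<in> carrier X" and e: "a \<ominus>\<^bsub>X\<^esub> b = \<zero>\<^bsub>X\<^esub>"
  shows "a = b"
proof -
  interpret X: module R X by fact
  have "a = (a \<ominus>\<^bsub>X\<^esub> b) \<oplus>\<^bsub>X\<^esub> b" using a b by (simp add: X.minus_eq X.a_assoc X.l_neg)
  then show ?thesis using e b by simp
qed

context constr begin

interpretation cring R by (rule cr)

lemma kernel_zero:
  assumes coker: "is_cokernel R Cs Bt \<sigma> T \<pi>" and p: "p \<in> carrier Cs"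
  shows "\<pi> (\<sigma> p) = \<zero>\<^bsub>T\<^esub>"
proof -
  have "\<sigma> p \<in> \<sigma> ` carrier Cs" using p by blast
  then have "\<sigma> p \<in> {y \<in> carrier Bt. \<pi> y = \<zero>\<^bsub>T\<^esub>}" using coker unfolding is_cokernel_def by simp
  then show ?thesis by simp
qed

lemma T_Div:
  assumes T: "module R T" and coker: "is_cokernel R Cs Bt \<sigma> T \<pi>"
  shows "Div R G T"
  unfolding Div_def
proof
  interpret TM: module R T by fact
  interpret FM: module R F by (rule mod_F)
  interpret F'M: module R F' by (rule mod_F')
  interpret KM: module R K by (rule mod_K)
  interpret BM: module R Bt by (rule mod_Bt)
  have pi: "\<pi> \<in> mod_hom R Bt T" and surj: "\<pi> ` carrier Bt = carrier T"
    using coker unfolding is_cokernel_def by auto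
  fix J assume J: "J \<in> G"
  obtain I where I: "I \<in> fI" "I \<subseteq> J" using fin_type_below[OF J] by blast
  have Isub: "I \<subseteq> carrier R" using G_sub[OF fI_G[OF I(1)]] .
  have Jsub: "J \<subseteq> carrier R" using G_sub[OF J] .
  define j1 where "j1 = (\<lambda>f::('a set \<times> nat) list \<Rightarrow> 'a. (f, \<zero>\<^bsub>F'\<^esub>))"
  define j2 where "j2 = (\<lambda>f::('a set \<times> nat) list \<Rightarrow> 'a. (\<zero>\<^bsub>F\<^esub>, f))"
  have j1: "j1 \<in> mod_hom R F Bt" by (rule mod_homI) (simp_all add: j1_def Bt_carrier Bt_ops)
  have j2: "j2 \<in> mod_hom R F' Bt" by (rule mod_homI) (simp_all add: j2_def Bt_carrier Bt_ops)
  have p1: "\<pi> \<circ> j1 \<in> mod_hom R F T" by (rule mod_hom_comp[OF j1 pi])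
  have p2: "\<pi> \<circ> j2 \<in> mod_hom R F' T" by (rule mod_hom_comp[OF j2 pi])
  have p2w: "\<pi> \<circ> j2 \<circ> projw R \<in> mod_hom R F T" by (rule mod_hom_comp[OF projw_hom p2])
  have b1: "(\<pi> \<circ> j1) (fbasis R l) \<in> mod_ideal_prod R T I" if l: "l \<in> Lm" for l
  proof -
    have ek: "\<And>k. k < length (gens I) \<Longrightarrow> fbasis R (l @ [(I, k)]) \<in> carrier F"
      using fbasis_F[OF Lam_snoc[OF l I(1)]] by blast
    let ?S = "finsum T (\<lambda>k. (gens I ! k) \<odot>\<^bsub>T\<^esub> (\<pi> \<circ> j1) (fbasis R (l @ [(I,k)]))) {..<length (gens I)}"
    have Sin: "?S \<in> mod_ideal_prod R T I"
      by (rule mip_intro) (use ek gens_in[OF I(1)] mod_homD[OF p1] in auto)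
    have Sc: "?S \<in> carrier T" using Sin mip_carrier[OF T Isub] by blast
    have pk: "(fbasis R (l,I), \<zero>\<^bsub>K\<^esub>) \<in> carrier Cs" unfolding Cs_carrier using fbasis_K[OF l I(1)] by simp
    have "\<sigma> (fbasis R (l,I), \<zero>\<^bsub>K\<^esub>) = j1 (phi_basis R G gens (l,I))"
      unfolding sigma_apply phiG_basis[OF l I(1)] phiG_zero j1_def
      using mod_hom_zero[OF mod_F mod_F' projw_hom] by simp
    then have "(\<pi> \<circ> j1) (phi_basis R G gens (l,I)) = \<zero>\<^bsub>T\<^esub>" using kernel_zero[OF coker pk] by simp
    then have "(\<pi> \<circ> j1) (fbasis R l) \<ominus>\<^bsub>T\<^esub> ?S = \<zero>\<^bsub>T\<^esub>" unfolding hom_phi_basis[OF T p1 l I(1)] .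
    then have "(\<pi> \<circ> j1) (fbasis R l) = ?S"
      by (rule minus_zero_eq[OF T mod_homD(1)[OF p1 fbasis_F[OF l]] Sc])
    then show ?thesis using Sin by simp
  qed
  have b2: "(\<pi> \<circ> j2) (fbasis R l) \<in> mod_ideal_prod R T I" if l: "l \<in> Lm" and ln: "l \<noteq> []" for l
  proof -
    have ek: "\<And>k. k < length (gens I) \<Longrightarrow> fbasis R (l @ [(I, k)]) \<in> carrier F"
      using fbasis_F[OF Lam_snoc[OF l I(1)]] by blast
    have ek': "\<And>k. k < length (gens I) \<Longrightarrow> fbasis R (l @ [(I, k)]) \<in> carrier F'"
      using fbasis_F'[OF Lam_snoc[OF l I(1)]] by blast
    have pw: "\<And>k. projw R (fbasis R (l @ [(I, k)])) = fbasis R (l @ [(I, k)])"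
      by (rule projw_fbasis) simp
    let ?S = "finsum T (\<lambda>k. (gens I ! k) \<odot>\<^bsub>T\<^esub> (\<pi> \<circ> j2) (fbasis R (l @ [(I,k)]))) {..<length (gens I)}"
    have Sin: "?S \<in> mod_ideal_prod R T I"
      by (rule mip_intro) (use ek' gens_in[OF I(1)] mod_homD[OF p2] in auto)
    have Sc: "?S \<in> carrier T" using Sin mip_carrier[OF T Isub] by blast
    have pk: "(\<zero>\<^bsub>K\<^esub>, fbasis R (l,I)) \<in> carrier Cs" unfolding Cs_carrier using fbasis_K[OF l I(1)] by simp
    have "\<sigma> (\<zero>\<^bsub>K\<^esub>, fbasis R (l,I)) = j2 (projw R (phi_basis R G gens (l,I)))"
      unfolding sigma_apply phiG_basis[OF l I(1)] phiG_zero j2_def ..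
    then have "(\<pi> \<circ> j2 \<circ> projw R) (phi_basis R G gens (l,I)) = \<zero>\<^bsub>T\<^esub>" using kernel_zero[OF coker pk] by simp
    then have "(\<pi> \<circ> j2 \<circ> projw R) (fbasis R l) \<ominus>\<^bsub>T\<^esub>
           finsum T (\<lambda>k. (gens I ! k) \<odot>\<^bsub>T\<^esub> (\<pi> \<circ> j2 \<circ> projw R) (fbasis R (l @ [(I,k)]))) {..<length (gens I)}
         = \<zero>\<^bsub>T\<^esub>" unfolding hom_phi_basis[OF T p2w l I(1)] .
    then have "(\<pi> \<circ> j2) (fbasis R l) \<ominus>\<^bsub>T\<^esub> ?S = \<zero>\<^bsub>T\<^esub>" using projw_fbasis[OF ln] pw by simp
    then have "(\<pi> \<circ> j2) (fbasis R l) = ?S"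
      by (rule minus_zero_eq[OF T mod_homD(1)[OF p2 fbasis_F'[OF l ln]] Sc])
    then show ?thesis using Sin by simp
  qed
  have all1: "(\<pi> \<circ> j1) f \<in> mod_ideal_prod R T I" if f: "f \<in> carrier F" for f
  proof -
    have f': "f \<in> carrier (free_module R Lm)" using f by (simp add: FG_def)
    have p1': "\<pi> \<circ> j1 \<in> mod_hom R (free_module R Lm) T" using p1 by (simp add: FG_def)
    show ?thesis
    proof (rule free_induct[OF cr f'])
      show "(\<pi> \<circ> j1) (\<lambda>b. \<zero>) \<in> mod_ideal_prod R T I"
        using mod_hom_zero[OF mod_F T p1] mip_zero[OF T] by (simp add: FG_def)
    next
      fix g b a assume g: "g \<in> carrier (free_module R Lm)" and b: "b \<in> Lm" and a: "a \<in> carrier R"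
        and Pg: "(\<pi> \<circ> j1) g \<in> mod_ideal_prod R T I"
      have e: "fbasis R b \<in> carrier (free_module R Lm)" by (rule fbasis_carrier[OF cr b])
      have ae: "a \<odot>\<^bsub>free_module R Lm\<^esub> fbasis R b \<in> carrier (free_module R Lm)"
        using FM.smult_closed[OF a] e by (simp add: FG_def)
      have "(\<pi> \<circ> j1) (a \<odot>\<^bsub>free_module R Lm\<^esub> fbasis R b \<oplus>\<^bsub>free_module R Lm\<^esub> g)
          = a \<odot>\<^bsub>T\<^esub> (\<pi> \<circ> j1) (fbasis R b) \<oplus>\<^bsub>T\<^esub> (\<pi> \<circ> j1) g"
        using mod_homD(2)[OF p1' ae g] mod_homD(3)[OF p1' a e] by simp
      also have "\<dots> \<in> mod_ideal_prod R T I"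
        by (rule mip_add[OF T Isub mip_smult[OF T Isub b1[OF b] a] Pg])
      finally show "(\<pi> \<circ> j1) (a \<odot>\<^bsub>free_module R Lm\<^esub> fbasis R b \<oplus>\<^bsub>free_module R Lm\<^esub> g) \<in> mod_ideal_prod R T I" .
    qed
  qed
  have all2: "(\<pi> \<circ> j2) f \<in> mod_ideal_prod R T I" if f: "f \<in> carrier F'" for f
  proof -
    have f': "f \<in> carrier (free_module R (Lm - {[]}))" using f by (simp add: FG'_def)
    have p2': "\<pi> \<circ> j2 \<in> mod_hom R (free_module R (Lm - {[]})) T" using p2 by (simp add: FG'_def)
    show ?thesis
    proof (rule free_induct[OF cr f'])
      show "(\<pi> \<circ> j2) (\<lambda>b. \<zero>) \<in> mod_ideal_prod R T I"
        using mod_hom_zero[OF mod_F' T p2] mip_zero[OF T] by (simp add: FG'_def)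
    next
      fix g b a assume g: "g \<in> carrier (free_module R (Lm - {[]}))" and b: "b \<in> Lm - {[]}" and a: "a \<in> carrier R"
        and Pg: "(\<pi> \<circ> j2) g \<in> mod_ideal_prod R T I"
      have e: "fbasis R b \<in> carrier (free_module R (Lm - {[]}))" by (rule fbasis_carrier[OF cr b])
      have ae: "a \<odot>\<^bsub>free_module R (Lm - {[]})\<^esub> fbasis R b \<in> carrier (free_module R (Lm - {[]}))"
        using F'M.smult_closed[OF a] e by (simp add: FG'_def)
      have "(\<pi> \<circ> j2) (a \<odot>\<^bsub>free_module R (Lm - {[]})\<^esub> fbasis R b \<oplus>\<^bsub>free_module R (Lm - {[]})\<^esub> g)
          = a \<odot>\<^bsub>T\<^esub> (\<pi> \<circ> j2) (fbasis R b) \<oplus>\<^bsub>T\<^esub> (\<pi> \<circ> j2) g"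
        using mod_homD(2)[OF p2' ae g] mod_homD(3)[OF p2' a e] by simp
      also have "\<dots> \<in> mod_ideal_prod R T I"
        using b by (intro mip_add[OF T Isub mip_smult[OF T Isub b2 a] Pg]) auto
      finally show "(\<pi> \<circ> j2) (a \<odot>\<^bsub>free_module R (Lm - {[]})\<^esub> fbasis R b \<oplus>\<^bsub>free_module R (Lm - {[]})\<^esub> g) \<in> mod_ideal_prod R T I" .
    qed
  qed
  have main: "t \<in> mod_ideal_prod R T I" if t: "t \<in> carrier T" for t
  proof -
    have "t \<in> \<pi> ` carrier Bt" using t surj by simp
    then obtain y where y2: "t = \<pi> y" and y1: "y \<in> carrier Bt" by (rule imageE)
    note y = y1 y2
    obtain f f' where ff: "y = (f, f')" "f \<in> carrier F" "f' \<in> carrier F'" using y(1) unfolding Bt_carrier by auto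
    have "y = j1 f \<oplus>\<^bsub>Bt\<^esub> j2 f'" using ff by (simp add: j1_def j2_def Bt_ops)
    then have "t = (\<pi> \<circ> j1) f \<oplus>\<^bsub>T\<^esub> (\<pi> \<circ> j2) f'"
      using y(2) mod_homD(2)[OF pi mod_homD(1)[OF j1 ff(2)] mod_homD(1)[OF j2 ff(3)]] by simp
    then show ?thesis using mip_add[OF T Isub all1[OF ff(2)] all2[OF ff(3)]] by simp
  qed
  show "mod_ideal_prod R T J = carrier T"
  proof
    show "mod_ideal_prod R T J \<subseteq> carrier T" by (rule mip_carrier[OF T Jsub])
    show "carrier T \<subseteq> mod_ideal_prod R T J"
    proof
      fix x assume "x \<in> carrier T"
      then have "x \<in> mod_ideal_prod R T I" by (rule main)
      then show "x \<in> mod_ideal_prod R T J" using mip_mono[OF I(2)] by (rule subsetD[rotated])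
    qed
  qed
qed

end


lemma Gen_Div:
  fixes R (structure) and T :: "('a,'t) module" and X :: "('a,'x) module"
  assumes T: "module R T" and TD: "Div R G T" and X: "module R X" and Gn: "Gen R T X"
    and Gsub: "\<And>J. J \<in> G \<Longrightarrow> J \<subseteq> carrier R"
  shows "Div R G X"
  unfolding Div_def
proof
  interpret TM: module R T by fact
  interpret XM: module R X by fact
  obtain Ii :: "('t \<Rightarrow> 'x) set" and p where p: "p \<in> mod_hom R (copies T Ii) X"
    and ps: "p ` carrier (copies T Ii) = carrier X"
    using Gn unfolding Gen_def by blast
  have CM: "module R (copies T Ii)" by (rule copies_module[OF T])
  interpret CM: module R "copies T Ii" by (rule CM)
  fix J assume J: "J \<in> G"
  have Jsub: "J \<subseteq> carrier R" by (rule Gsub[OF J])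
  have TJ: "carrier T \<subseteq> mod_ideal_prod R T J" using TD J unfolding Div_def by simp
  have pf: "p f \<in> mod_ideal_prod R X J" if f: "f \<in> carrier (copies T Ii)" for f
  proof (rule copies_induct[OF T f])
    show "p (\<lambda>i. \<zero>\<^bsub>T\<^esub>) \<in> mod_ideal_prod R X J"
      using mod_hom_zero[OF CM X p] mip_zero[OF X] by simp
  next
    fix g i t assume g: "g \<in> carrier (copies T Ii)" and i: "i \<in> Ii" and t: "t \<in> carrier T"
      and Pg: "p g \<in> mod_ideal_prod R X J"
    have sh: "single T i \<in> mod_hom R T (copies T Ii)" by (rule single_hom[OF T i])
    have st: "single T i t \<in> carrier (copies T Ii)" by (rule mod_homD(1)[OF sh t])
    have "(p \<circ> single T i) t \<in> mod_ideal_prod R X J"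
      by (rule mip_hom[OF T X mod_hom_comp[OF sh p] Jsub]) (use TJ t in blast)
    then have "p (single T i t) \<oplus>\<^bsub>X\<^esub> p g \<in> mod_ideal_prod R X J"
      using mip_add[OF X Jsub _ Pg] by simp
    then show "p (single T i t \<oplus>\<^bsub>copies T Ii\<^esub> g) \<in> mod_ideal_prod R X J"
      using mod_homD(2)[OF p st g] by simp
  qed
  show "mod_ideal_prod R X J = carrier X"
  proof
    show "mod_ideal_prod R X J \<subseteq> carrier X" by (rule mip_carrier[OF X Jsub])
    show "carrier X \<subseteq> mod_ideal_prod R X J"
    proof
      fix x assume "x \<in> carrier X"
      then have "x \<in> p ` carrier (copies T Ii)" using ps by simp
      then obtain f where "x = p f" "f \<in> carrier (copies T Ii)" by (rule imageE)
      then show "x \<in> mod_ideal_prod R X J" using pf by simp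
    qed
  qed
qed


definition summap :: "('a,'t) module \<Rightarrow> ('a,'x) module \<Rightarrow> (('t \<Rightarrow> 'x) \<Rightarrow> 't) \<Rightarrow> 'x" where
  "summap T X f = finsum X (\<lambda>\<phi>. \<phi> (f \<phi>)) {\<phi>. f \<phi> \<noteq> \<zero>\<^bsub>T\<^esub>}"

lemma summap_superset:
  fixes R (structure) and T :: "('a,'t) module" and X :: "('a,'x) module"
  assumes T: "module R T" and X: "module R X" and f: "f \<in> carrier (copies T (mod_hom R T X))"
    and A: "finite A" "{\<phi>. f \<phi> \<noteq> \<zero>\<^bsub>T\<^esub>} \<subseteq> A" "A \<subseteq> mod_hom R T X"
  shows "summap T X f = finsum X (\<lambda>\<phi>. \<phi> (f \<phi>)) A"
proof -
  interpret TM: module R T by fact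
  interpret XM: module R X by fact
  have fc: "\<And>\<phi>. f \<phi> \<in> carrier T" using f by (simp add: copies_carrier)
  show ?thesis unfolding summap_def
  proof (rule XM.add.finprod_mono_neutral_cong_left[OF A(1,2)])
    fix \<phi> assume "\<phi> \<in> A - {\<phi>. f \<phi> \<noteq> \<zero>\<^bsub>T\<^esub>}"
    then have "\<phi> \<in> mod_hom R T X" "f \<phi> = \<zero>\<^bsub>T\<^esub>" using A(3) by auto
    then show "\<phi> (f \<phi>) = \<zero>\<^bsub>X\<^esub>" using mod_hom_zero[OF T X, of \<phi>] by simp
  next
    show "(\<lambda>\<phi>. \<phi> (f \<phi>)) \<in> A \<rightarrow> carrier X"
    proof
      fix \<phi> assume "\<phi> \<in> A"
      then have "\<phi> \<in> mod_hom R T X" using A(3) by auto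
      then show "\<phi> (f \<phi>) \<in> carrier X" by (rule mod_homD(1)[OF _ fc])
    qed
  qed simp
qed

lemma summap_hom:
  fixes R (structure) and T :: "('a,'t) module" and X :: "('a,'x) module"
  assumes T: "module R T" and X: "module R X"
  shows "summap T X \<in> mod_hom R (copies T (mod_hom R T X)) X"
proof -
  interpret TM: module R T by fact
  interpret XM: module R X by fact
  let ?C = "copies T (mod_hom R T X)"
  interpret CM: module R ?C by (rule copies_module[OF T])
  let ?S = "\<lambda>f. {\<phi>. f \<phi> \<noteq> \<zero>\<^bsub>T\<^esub>}"
  have fin: "finite (?S f)" "?S f \<subseteq> mod_hom R T X" if "f \<in> carrier ?C" for f
    using that by (auto simp: copies_carrier)
  have fc: "\<And>\<phi>. f \<phi> \<in> carrier T" if "f \<in> carrier ?C" for f using that by (simp add: copies_carrier)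
  have tc: "(\<lambda>\<phi>. \<phi> (f \<phi>)) \<in> A \<rightarrow> carrier X" if "f \<in> carrier ?C" "A \<subseteq> mod_hom R T X" for f A
  proof
    fix \<phi> assume "\<phi> \<in> A"
    then have "\<phi> \<in> mod_hom R T X" using that(2) by auto
    then show "\<phi> (f \<phi>) \<in> carrier X" by (rule mod_homD(1)[OF _ fc[OF that(1)]])
  qed
  show ?thesis
  proof (rule mod_homI)
    fix f assume f: "f \<in> carrier ?C"
    show "summap T X f \<in> carrier X" unfolding summap_def
      by (rule XM.finsum_closed[OF tc[OF f fin(2)[OF f]]])
  next
    fix f g assume f: "f \<in> carrier ?C" and g: "g \<in> carrier ?C"
    let ?A = "?S f \<union> ?S g"
    have A: "finite ?A" "?A \<subseteq> mod_hom R T X" using fin[OF f] fin[OF g] by auto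
    have fg: "f \<oplus>\<^bsub>?C\<^esub> g \<in> carrier ?C" by (rule CM.a_closed[OF f g])
    have sub: "?S (f \<oplus>\<^bsub>?C\<^esub> g) \<subseteq> ?A" using fc[OF f] fc[OF g] by auto
    have "summap T X (f \<oplus>\<^bsub>?C\<^esub> g) = finsum X (\<lambda>\<phi>. \<phi> ((f \<oplus>\<^bsub>?C\<^esub> g) \<phi>)) ?A"
      by (rule summap_superset[OF T X fg A(1) sub A(2)])
    also have "\<dots> = finsum X (\<lambda>\<phi>. \<phi> (f \<phi>) \<oplus>\<^bsub>X\<^esub> \<phi> (g \<phi>)) ?A"
    proof (rule XM.finsum_cong')
      fix \<phi> assume "\<phi> \<in> ?A"
      then have "\<phi> \<in> mod_hom R T X" using A(2) by blast
      then show "\<phi> ((f \<oplus>\<^bsub>?C\<^esub> g) \<phi>) = \<phi> (f \<phi>) \<oplus>\<^bsub>X\<^esub> \<phi> (g \<phi>)"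
        using mod_homD(2)[OF _ fc[OF f] fc[OF g]] by simp
    next
      show "(\<lambda>\<phi>. \<phi> (f \<phi>) \<oplus>\<^bsub>X\<^esub> \<phi> (g \<phi>)) \<in> ?A \<rightarrow> carrier X"
        using tc[OF f A(2)] tc[OF g A(2)] by (auto simp: Pi_def)
    qed simp
    also have "\<dots> = finsum X (\<lambda>\<phi>. \<phi> (f \<phi>)) ?A \<oplus>\<^bsub>X\<^esub> finsum X (\<lambda>\<phi>. \<phi> (g \<phi>)) ?A"
      by (rule XM.finsum_addf[OF tc[OF f A(2)] tc[OF g A(2)]])
    also have "\<dots> = summap T X f \<oplus>\<^bsub>X\<^esub> summap T X g"
      by (simp add: summap_superset[OF T X f A(1) _ A(2)] summap_superset[OF T X g A(1) _ A(2)])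
    finally show "summap T X (f \<oplus>\<^bsub>?C\<^esub> g) = summap T X f \<oplus>\<^bsub>X\<^esub> summap T X g" .
  next
    fix a f assume a: "a \<in> carrier R" and f: "f \<in> carrier ?C"
    let ?A = "?S f"
    have A: "finite ?A" "?A \<subseteq> mod_hom R T X" using fin[OF f] by auto
    have af: "a \<odot>\<^bsub>?C\<^esub> f \<in> carrier ?C" by (rule CM.smult_closed[OF a f])
    have sub: "?S (a \<odot>\<^bsub>?C\<^esub> f) \<subseteq> ?A" using fc[OF f] a by auto
    have "summap T X (a \<odot>\<^bsub>?C\<^esub> f) = finsum X (\<lambda>\<phi>. \<phi> ((a \<odot>\<^bsub>?C\<^esub> f) \<phi>)) ?A"
      by (rule summap_superset[OF T X af A(1) sub A(2)])
    also have "\<dots> = finsum X (\<lambda>\<phi>. a \<odot>\<^bsub>X\<^esub> \<phi> (f \<phi>)) ?A"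
    proof (rule XM.finsum_cong')
      fix \<phi> assume "\<phi> \<in> ?A"
      then have "\<phi> \<in> mod_hom R T X" using A(2) by blast
      then show "\<phi> ((a \<odot>\<^bsub>?C\<^esub> f) \<phi>) = a \<odot>\<^bsub>X\<^esub> \<phi> (f \<phi>)"
        using mod_homD(3)[OF _ a fc[OF f]] by simp
    next
      show "(\<lambda>\<phi>. a \<odot>\<^bsub>X\<^esub> \<phi> (f \<phi>)) \<in> ?A \<rightarrow> carrier X"
        using tc[OF f A(2)] a by (auto simp: Pi_def)
    qed simp
    also have "\<dots> = a \<odot>\<^bsub>X\<^esub> finsum X (\<lambda>\<phi>. \<phi> (f \<phi>)) ?A"
      by (rule XM.finsum_smult_ldistr[symmetric, OF A(1) a tc[OF f A(2)]])
    also have "\<dots> = a \<odot>\<^bsub>X\<^esub> summap T X f" unfolding summap_def ..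
    finally show "summap T X (a \<odot>\<^bsub>?C\<^esub> f) = a \<odot>\<^bsub>X\<^esub> summap T X f" .
  qed
qed

lemma summap_single:
  fixes R (structure) and T :: "('a,'t) module" and X :: "('a,'x) module"
  assumes T: "module R T" and X: "module R X" and \<phi>: "\<phi> \<in> mod_hom R T X" and t: "t \<in> carrier T"
  shows "summap T X (single T \<phi> t) = \<phi> t"
proof -
  interpret TM: module R T by fact
  interpret XM: module R X by fact
  have s: "single T \<phi> t \<in> carrier (copies T (mod_hom R T X))" by (rule mod_homD(1)[OF single_hom[OF T \<phi>] t])
  have sub: "{\<psi>. single T \<phi> t \<psi> \<noteq> \<zero>\<^bsub>T\<^esub>} \<subseteq> {\<phi>}" by (auto simp: single_def)
  have "summap T X (single T \<phi> t) = finsum X (\<lambda>\<psi>. \<psi> (single T \<phi> t \<psi>)) {\<phi>}"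
    by (rule summap_superset[OF T X s _ sub]) (use \<phi> in auto)
  also have "\<dots> = \<phi> t" using mod_homD(1)[OF \<phi> t] by (simp add: single_def)
  finally show ?thesis .
qed



context constr begin

interpretation cring R by (rule cr)

lemma factor:
  fixes T :: "('a,'t) module" and X :: "('a,'x) module"
  assumes T: "module R T" and coker: "is_cokernel R Cs Bt \<sigma> T \<pi>"
    and X: "module R X" and Dv: "Div R G X" and x: "x \<in> carrier X"
  shows "\<exists>\<phi>\<in>mod_hom R T X. \<exists>t\<in>carrier T. \<phi> t = x"
proof -
  interpret TM: module R T by fact
  interpret XM: module R X by fact
  interpret BM: module R Bt by (rule mod_Bt)
  interpret F'M: module R F' by (rule mod_F')
  have pi: "\<pi> \<in> mod_hom R Bt T" and surj: "\<pi> ` carrier Bt = carrier T"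
    and ker: "{y \<in> carrier Bt. \<pi> y = \<zero>\<^bsub>T\<^esub>} = \<sigma> ` carrier Cs"
    using coker unfolding is_cokernel_def by auto
  have g0: "(\<lambda>_. \<zero>\<^bsub>X\<^esub>) \<in> mod_hom R Cs X" by (rule mod_homI) simp_all
  obtain h where h: "h \<in> mod_hom R Bt X" and hs0: "\<forall>a\<in>carrier Cs. h (\<sigma> a) = \<zero>\<^bsub>X\<^esub>"
    and hr: "h (fbasis R [], \<zero>\<^bsub>F'\<^esub>) = x"
    using extend[OF X Dv g0 x] by blast
  have wd: "h y1 = h y2" if y1: "y1 \<in> carrier Bt" and y2: "y2 \<in> carrier Bt" and e: "\<pi> y1 = \<pi> y2" for y1 y2
  proof -
    have d: "y1 \<ominus>\<^bsub>Bt\<^esub> y2 \<in> carrier Bt" using y1 y2 by simp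
    have "\<pi> (y1 \<ominus>\<^bsub>Bt\<^esub> y2) = \<pi> y1 \<ominus>\<^bsub>T\<^esub> \<pi> y2" by (rule mod_hom_minus[OF mod_Bt T pi y1 y2])
    also have "\<dots> = \<zero>\<^bsub>T\<^esub>" using e mod_homD(1)[OF pi y2] by (simp add: TM.r_neg TM.minus_eq)
    finally have "y1 \<ominus>\<^bsub>Bt\<^esub> y2 \<in> {y \<in> carrier Bt. \<pi> y = \<zero>\<^bsub>T\<^esub>}" using d by simp
    then have "y1 \<ominus>\<^bsub>Bt\<^esub> y2 \<in> \<sigma> ` carrier Cs" using ker by simp
    then obtain a where a: "y1 \<ominus>\<^bsub>Bt\<^esub> y2 = \<sigma> a" "a \<in> carrier Cs" by (rule imageE)
    have "h y1 \<ominus>\<^bsub>X\<^esub> h y2 = h (y1 \<ominus>\<^bsub>Bt\<^esub> y2)" by (rule mod_hom_minus[OF mod_Bt X h y1 y2, symmetric])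
    also have "\<dots> = \<zero>\<^bsub>X\<^esub>" using a hs0 by simp
    finally show ?thesis by (rule minus_zero_eq[OF X mod_homD(1)[OF h y1] mod_homD(1)[OF h y2]])
  qed
  define \<phi> where "\<phi> t = h (SOME y. y \<in> carrier Bt \<and> \<pi> y = t)" for t
  have phi_pi: "\<phi> (\<pi> y) = h y" if y: "y \<in> carrier Bt" for y
  proof -
    have ex: "\<exists>y'. y' \<in> carrier Bt \<and> \<pi> y' = \<pi> y" using y by blast
    have "(SOME y'. y' \<in> carrier Bt \<and> \<pi> y' = \<pi> y) \<in> carrier Bt \<and> \<pi> (SOME y'. y' \<in> carrier Bt \<and> \<pi> y' = \<pi> y) = \<pi> y"
      by (rule someI_ex[OF ex])
    then show ?thesis unfolding \<phi>_def using wd y by blast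
  qed
  have pre: "\<exists>y. y \<in> carrier Bt \<and> t = \<pi> y" if "t \<in> carrier T" for t
  proof -
    have "t \<in> \<pi> ` carrier Bt" using that surj by simp
    then obtain y where "t = \<pi> y" "y \<in> carrier Bt" by (rule imageE)
    then show ?thesis by blast
  qed
  have phi: "\<phi> \<in> mod_hom R T X"
  proof (rule mod_homI)
    fix t assume "t \<in> carrier T"
    then obtain y where y: "y \<in> carrier Bt" "t = \<pi> y" using pre by blast
    then show "\<phi> t \<in> carrier X" using phi_pi[OF y(1)] mod_homD(1)[OF h y(1)] by simp
  next
    fix t1 t2 assume "t1 \<in> carrier T" "t2 \<in> carrier T"
    then obtain y1 y2 where y1: "y1 \<in> carrier Bt" "t1 = \<pi> y1" and y2: "y2 \<in> carrier Bt" "t2 = \<pi> y2"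
      using pre by meson
    have "t1 \<oplus>\<^bsub>T\<^esub> t2 = \<pi> (y1 \<oplus>\<^bsub>Bt\<^esub> y2)" using mod_homD(2)[OF pi y1(1) y2(1)] y1 y2 by simp
    then have "\<phi> (t1 \<oplus>\<^bsub>T\<^esub> t2) = h (y1 \<oplus>\<^bsub>Bt\<^esub> y2)" using phi_pi[OF BM.a_closed[OF y1(1) y2(1)]] by simp
    also have "\<dots> = h y1 \<oplus>\<^bsub>X\<^esub> h y2" by (rule mod_homD(2)[OF h y1(1) y2(1)])
    finally show "\<phi> (t1 \<oplus>\<^bsub>T\<^esub> t2) = \<phi> t1 \<oplus>\<^bsub>X\<^esub> \<phi> t2" using phi_pi[OF y1(1)] phi_pi[OF y2(1)] y1 y2 by simp
  next
    fix a t assume a: "a \<in> carrier R" and "t \<in> carrier T"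
    then obtain y where y: "y \<in> carrier Bt" "t = \<pi> y" using pre by blast
    have "a \<odot>\<^bsub>T\<^esub> t = \<pi> (a \<odot>\<^bsub>Bt\<^esub> y)" using mod_homD(3)[OF pi a y(1)] y by simp
    then have "\<phi> (a \<odot>\<^bsub>T\<^esub> t) = h (a \<odot>\<^bsub>Bt\<^esub> y)" using phi_pi[OF BM.smult_closed[OF a y(1)]] by simp
    also have "\<dots> = a \<odot>\<^bsub>X\<^esub> h y" by (rule mod_homD(3)[OF h a y(1)])
    finally show "\<phi> (a \<odot>\<^bsub>T\<^esub> t) = a \<odot>\<^bsub>X\<^esub> \<phi> t" using phi_pi[OF y(1)] y by simp
  qed
  have y0: "(fbasis R [], \<zero>\<^bsub>F'\<^esub>) \<in> carrier Bt" unfolding Bt_carrier using fbasis_F[OF Lam_Nil] by simp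
  have "\<phi> (\<pi> (fbasis R [], \<zero>\<^bsub>F'\<^esub>)) = x" using phi_pi[OF y0] hr by simp
  moreover have "\<pi> (fbasis R [], \<zero>\<^bsub>F'\<^esub>) \<in> carrier T" by (rule mod_homD(1)[OF pi y0])
  ultimately show ?thesis using phi by blast
qed

lemma Div_Gen:
  fixes T :: "('a,'t) module" and X :: "('a,'x) module"
  assumes T: "module R T" and coker: "is_cokernel R Cs Bt \<sigma> T \<pi>"
    and X: "module R X" and Dv: "Div R G X"
  shows "Gen R T X"
proof -
  interpret TM: module R T by fact
  interpret XM: module R X by fact
  let ?C = "copies T (mod_hom R T X)"
  have p: "summap T X \<in> mod_hom R ?C X" by (rule summap_hom[OF T X])
  have "summap T X ` carrier ?C = carrier X"
  proof
    show "summap T X ` carrier ?C \<subseteq> carrier X" using mod_homD(1)[OF p] by blast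
  next
    show "carrier X \<subseteq> summap T X ` carrier ?C"
    proof
      fix x assume x: "x \<in> carrier X"
      obtain \<phi> t where \<phi>: "\<phi> \<in> mod_hom R T X" and t: "t \<in> carrier T" and e: "\<phi> t = x"
        using factor[OF T coker X Dv x] by blast
      have s: "single T \<phi> t \<in> carrier ?C" by (rule mod_homD(1)[OF single_hom[OF T \<phi>] t])
      have "summap T X (single T \<phi> t) = x" using summap_single[OF T X \<phi> t] e by simp
      then show "x \<in> summap T X ` carrier ?C" using s by (rule image_eqI[OF sym])
    qed
  qed
  then show ?thesis unfolding Gen_def using p by blast
qed

end


lemma triv_carrier:
  fixes R (structure)
  assumes X: "module R X" and e: "\<one> = \<zero>" and x: "x \<in> carrier X"
  shows "x = \<zero>\<^bsub>X\<^esub>"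
proof -
  interpret X: module R X by fact
  have "x = \<one> \<odot>\<^bsub>X\<^esub> x" using x by simp
  also have "\<dots> = \<zero> \<odot>\<^bsub>X\<^esub> x" using e by simp
  also have "\<dots> = \<zero>\<^bsub>X\<^esub>" using x by simp
  finally show ?thesis .
qed

lemma triv_all:
  fixes R (structure) and T :: "('a,'t) module" and X :: "('a,'x) module"
  assumes T: "module R T" and X: "module R X" and e: "\<one> = \<zero>" and Gsub: "\<And>J. J \<in> G \<Longrightarrow> J \<subseteq> carrier R"
  shows "Gen R T X" and "D_class R A B \<alpha> X" and "Div R G X"
proof -
  interpret T: module R T by fact
  interpret X: module R X by fact
  have triv: "\<And>x. x \<in> carrier X \<Longrightarrow> x = \<zero>\<^bsub>X\<^esub>" by (rule triv_carrier[OF X e])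
  have z: "(\<lambda>_. \<zero>\<^bsub>X\<^esub>) \<in> mod_hom R M X" for M :: "('a,'m) module"
    by (rule mod_homI) simp_all
  show "Gen R T X" unfolding Gen_def
  proof (intro exI conjI)
    show "(\<lambda>_. \<zero>\<^bsub>X\<^esub>) \<in> mod_hom R (copies T ({}::('t \<Rightarrow> 'x) set)) X" by (rule z)
    have "(\<lambda>i. \<zero>\<^bsub>T\<^esub>) \<in> carrier (copies T ({}::('t \<Rightarrow> 'x) set))"
      by (simp add: copies_carrier)
    then show "(\<lambda>_. \<zero>\<^bsub>X\<^esub>) ` carrier (copies T ({}::('t \<Rightarrow> 'x) set)) = carrier X"
      using triv by auto
  qed
  show "D_class R A B \<alpha> X" unfolding D_class_def
  proof
    fix g assume g: "g \<in> mod_hom R A X"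
    show "\<exists>h\<in>mod_hom R B X. \<forall>a\<in>carrier A. h (\<alpha> a) = g a"
    proof (intro bexI ballI)
      fix a assume "a \<in> carrier A"
      then have "g a \<in> carrier X" by (rule mod_homD(1)[OF g])
      then show "\<zero>\<^bsub>X\<^esub> = g a" by (rule triv[symmetric])
    qed (rule z)
  qed
  show "Div R G X" unfolding Div_def
  proof
    fix J assume J: "J \<in> G"
    show "mod_ideal_prod R X J = carrier X"
    proof
      show "mod_ideal_prod R X J \<subseteq> carrier X" by (rule mip_carrier[OF X Gsub[OF J]])
      show "carrier X \<subseteq> mod_ideal_prod R X J"
      proof
        fix x assume "x \<in> carrier X"
        then have "x = \<zero>\<^bsub>X\<^esub>" by (rule triv)
        then show "x \<in> mod_ideal_prod R X J" using mip_zero[OF X] by simp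
      qed
    qed
  qed
qed

theorem proposition4p6:
  fixes R :: "('a, 'c) ring_scheme"
    and G :: "'a set set"
    and gens :: "'a set \<Rightarrow> 'a list"
    and T :: "('a, 't) module"
    and \<pi> :: "(((('a set \<times> nat) list \<Rightarrow> 'a) \<times> (('a set \<times> nat) list \<Rightarrow> 'a)) \<Rightarrow> 't)"
  assumes "cring R"
    and "gabriel_filter R G"
    and "finite_type R G"
    and "\<forall>I\<in>fgI R G. set (gens I) \<subseteq> carrier R \<and> Idl\<^bsub>R\<^esub> (set (gens I)) = I"
    and "module R T"
    and "is_cokernel R (sigma_src R G gens) (sigma_tgt R G gens) (sigmaG R G gens) T \<pi>"
  shows "(\<forall>X :: ('a, 'x) module. module R X \<longrightarrow>
            (Gen R T X \<longleftrightarrow> D_class R (sigma_src R G gens) (sigma_tgt R G gens) (sigmaG R G gens) X))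
       \<and> (\<forall>X :: ('a, 'x) module. module R X \<longrightarrow> (Gen R T X \<longleftrightarrow> Div R G X))"
proof (cases "\<one>\<^bsub>R\<^esub> = \<zero>\<^bsub>R\<^esub>")
  case True
  have Gsub: "\<And>J. J \<in> G \<Longrightarrow> J \<subseteq> carrier R"
  proof -
    fix J assume J: "J \<in> G"
    have "ideal_filter R G" using assms(2) by (simp add: gabriel_filter_def)
    then have "ideal J R" using J unfolding ideal_filter_def by blast
    then show "J \<subseteq> carrier R" by (rule additive_subgroup.a_subset[OF ideal.axioms(1)])
  qed
  have t: "Gen R T X \<and> D_class R (sigma_src R G gens) (sigma_tgt R G gens) (sigmaG R G gens) X \<and> Div R G X"
    if "module R X" for X :: "('a, 'x) module"
    using triv_all[OF assms(5) that True Gsub] by simp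
  show ?thesis using t by simp
next
  case False
  interpret C: constr R G gens
    by (rule constr.intro) (use assms False in auto)
  have GD: "Gen R T X \<longleftrightarrow> Div R G X" if X: "module R X" for X :: "('a, 'x) module"
  proof
    assume "Gen R T X"
    then show "Div R G X"
      by (rule Gen_Div[OF assms(5) C.T_Div[OF assms(5,6)] X _ C.G_sub])
  next
    assume "Div R G X"
    then show "Gen R T X" by (rule C.Div_Gen[OF assms(5,6) X])
  qed
  have DD: "Div R G X \<longleftrightarrow> D_class R (sigma_src R G gens) (sigma_tgt R G gens) (sigmaG R G gens) X"
    if X: "module R X" for X :: "('a, 'x) module"
    using C.Div_imp_D[OF X] C.D_imp_Div[OF X] by (rule iffI)
  show ?thesis using GD DD by simp
qed


end
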